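(* Fix $d\in\mathbb{N}_+$, $\ell>0$, $\nu>1/2$, and let $k:\mathbb{S}^d\times\mathbb{S}^d\to\mathbb{R}$ be the Matérn kernel $k(\bm{x},\tilde{\bm{x}})=\frac{2^{1-\nu}}{\Gamma(\nu)}\big(\frac{\sqrt{2\nu}\|\bm{x}-\tilde{\bm{x}}\|_2}{\ell}\big)^{\nu}K_\nu\big(\frac{\sqrt{2\nu}\|\bm{x}-\tilde{\bm{x}}\|_2}{\ell}\big)$, written as $k(\bm{x},\tilde{\bm{x}})=\tilde{k}(\bm{x}^\top\tilde{\bm{x}})$ for a continuous $\tilde{k}:[-1,1]\to\mathbb{R}$. Then for every integer $m>2\nu$, the eigenvalue $$\lambda_m=|\mathbb{S}^{d-1}|\int_{-1}^1P_{m,d+1}(t)\tilde{k}(t)(1-t^2)^{\frac{d-2}{2}}\,\mathrm{d}t$$ satisfies $$\lambda_m\le\frac{\tilde{C}_{d,\nu}}{\ell^{2\nu}}m^{-2\nu-d},\qquad \tilde{C}_{d,\nu}=C_{d,\nu}\frac{\Gamma(2\nu+d)}{\Gamma^2(\nu+\frac{d+1}{2})}\exp\Big(2\nu+d+\frac16\Big),\quad C_{d,\nu}=\frac{2^{d+1}\pi^{(d+1)/2}\Gamma(\nu+\frac{d+1}{2})(2\nu)^\nu}{\Gamma(\nu)}.$$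
   Context: $\mathbb{S}^d=\{\bm{x}\in\mathbb{R}^{d+1}:\|\bm{x}\|_2=1\}$; $|\mathbb{S}^{d-1}|=2\pi^{d/2}/\Gamma(d/2)$; $K_\nu$ is the modified Bessel function of the second kind. $P_{m,d+1}$ is the Legendre polynomial of degree $m$ in $d+1$ dimensions: $P_{m,d+1}(t)=m!\,\Gamma(\frac d2)\sum_{k=0}^{\lfloor m/2\rfloor}(-1)^k\frac{(1-t^2)^kt^{m-2k}}{4^kk!(m-2k)!\Gamma(k+\frac d2)}$. Since $\|\bm{x}-\tilde{\bm{x}}\|_2=\sqrt{2-2\bm{x}^\top\tilde{\bm{x}}}$ on the sphere, $\tilde{k}$ exists. *)

theory Defs
  imports "HOL-Analysis.Analysis"
begin

definition besselK :: "real \<Rightarrow> real \<Rightarrow> real" where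
  "besselK nu z = integral {0..} (\<lambda>t. exp (- z * cosh t) * cosh (nu * t))"

text \<open>Matern kernel as a function of the Euclidean distance r = norm (x - x').
  At r = 0 it takes its limiting value 1 (the kernel is continuous).\<close>
definition matern :: "real \<Rightarrow> real \<Rightarrow> real \<Rightarrow> real" where
  "matern ell nu r =
     (if r = 0 then 1
      else 2 powr (1 - nu) / Gamma nu * (sqrt (2 * nu) * r / ell) powr nu
           * besselK nu (sqrt (2 * nu) * r / ell))"

text \<open>On the sphere, norm (x - x') = sqrt (2 - 2 x.x'), so k(x,x') = ktilde (x.x').\<close>
definition matern_tilde :: "real \<Rightarrow> real \<Rightarrow> real \<Rightarrow> real" where
  "matern_tilde ell nu t = matern ell nu (sqrt (2 - 2 * t))"

text \<open>Legendre polynomial of degree m in d+1 dimensions.\<close>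
definition legendreP :: "nat \<Rightarrow> nat \<Rightarrow> real \<Rightarrow> real" where
  "legendreP m d t = fact m * Gamma (real d / 2) *
     (\<Sum>k = 0..m div 2. (-1) ^ k * (1 - t\<^sup>2) ^ k * t ^ (m - 2 * k)
        / (4 ^ k * fact k * fact (m - 2 * k) * Gamma (real k + real d / 2)))"

text \<open>Surface area of the unit sphere S^{d-1}.\<close>
definition sphere_area :: "nat \<Rightarrow> real" where
  "sphere_area d = 2 * pi powr (real d / 2) / Gamma (real d / 2)"

definition matern_eigenvalue :: "nat \<Rightarrow> real \<Rightarrow> real \<Rightarrow> nat \<Rightarrow> real" where
  "matern_eigenvalue d ell nu m =
     sphere_area d * integral {-1..1}
       (\<lambda>t. legendreP m d t * matern_tilde ell nu t * (1 - t\<^sup>2) powr ((real d - 2) / 2))"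

definition C_const :: "nat \<Rightarrow> real \<Rightarrow> real" where
  "C_const d nu = 2 ^ (d + 1) * pi powr ((real d + 1) / 2) * Gamma (nu + (real d + 1) / 2)
                  * (2 * nu) powr nu / Gamma nu"

definition C_tilde :: "nat \<Rightarrow> real \<Rightarrow> real" where
  "C_tilde d nu = C_const d nu * Gamma (2 * nu + real d) / (Gamma (nu + (real d + 1) / 2))\<^sup>2
                  * exp (2 * nu + real d + 1 / 6)"

end

theory Submission
  imports Defs "HOL-Real_Asymp.Real_Asymp"
begin


definition cQ :: "real \<Rightarrow> nat \<Rightarrow> nat \<Rightarrow> real" where
  "cQ h m k = (if 2*k \<le> m then (-1)^k / (4^k * fact k * fact (m - 2*k) * Gamma (real k + h)) else 0)"

definition Qp :: "real \<Rightarrow> nat \<Rightarrow> real \<Rightarrow> real" where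
  "Qp h m t = fact m * Gamma h * (\<Sum>k\<le>m. cQ h m k * (1 - t\<^sup>2)^k * t^(m - 2*k))"

lemma legendreP_Qp: "legendreP m d t = Qp (real d / 2) m t"
proof -
  have "(\<Sum>k = 0..m div 2. (-1) ^ k * (1 - t\<^sup>2) ^ k * t ^ (m - 2 * k)
        / (4 ^ k * fact k * fact (m - 2 * k) * Gamma (real k + real d / 2)))
      = (\<Sum>k\<le>m. cQ (real d / 2) m k * (1 - t\<^sup>2)^k * t^(m - 2*k))"
  proof (rule sum.mono_neutral_cong_left)
    show "finite {..m}" by simp
    show "{0..m div 2} \<subseteq> {..m}" by auto
    show "\<forall>i\<in>{..m} - {0..m div 2}. cQ (real d / 2) m i * (1 - t\<^sup>2) ^ i * t ^ (m - 2 * i) = 0"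
      by (auto simp: cQ_def)
    show "(-1) ^ x * (1 - t\<^sup>2) ^ x * t ^ (m - 2 * x) /
         (4 ^ x * fact x * fact (m - 2 * x) * Gamma (real x + real d / 2)) =
         cQ (real d / 2) m x * (1 - t\<^sup>2) ^ x * t ^ (m - 2 * x)" if "x \<in> {0..m div 2}" for x
      using that by (auto simp: cQ_def)
  qed
  then show ?thesis unfolding legendreP_def Qp_def by simp
qed

lemma pos_not_nonpos_Int: "(x::real) > 0 \<Longrightarrow> x \<notin> \<int>\<^sub>\<le>\<^sub>0"
  by (auto elim!: nonpos_Ints_cases)

lemma Gamma_plus1_real: "(x::real) > 0 \<Longrightarrow> Gamma (x + 1) = x * Gamma x"
  using Gamma_plus1[of x] pos_not_nonpos_Int[of x] by simp

lemma key_coeff: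
  assumes h: "h > 0" and j: "j \<le> m"
  shows "-2*h*fact(m+1)*Gamma h * cQ h (m+1) (Suc j) =
     fact m * Gamma (h+1) * (cQ (h+1) m (Suc j) * (-2*(h + real (Suc j)))
       + cQ (h+1) m j * real (m - 2*j))"
proof -
  have G: "Gamma (h+1) = h * Gamma h" using Gamma_plus1_real[of h] h by simp
  have Gp: "Gamma h > 0" using h by (simp add: Gamma_real_pos)
  have GS: "Gamma (real (Suc j) + h) > 0" using h by (intro Gamma_real_pos) auto
  have G2: "Gamma (real (Suc j) + (h + 1)) = (real (Suc j) + h) * Gamma (real (Suc j) + h)"
    using Gamma_plus1_real[of "real (Suc j) + h"] h by (simp add: algebra_simps)
  have G3: "Gamma (real j + (h + 1)) = Gamma (real (Suc j) + h)" by (simp add: algebra_simps)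
  consider "2 * Suc j \<le> m" | "2 * Suc j = m + 1" | "2 * Suc j > m + 1" by linarith
  then show ?thesis
  proof cases
    case 1
    then obtain n where n: "m = n + 2 * Suc j" by (metis le_add_diff_inverse2)
    have e1: "m + 1 - 2 * Suc j = Suc n" "m - 2 * Suc j = n" "m - 2*j = Suc (Suc n)" using n by auto
    define G where "G = Gamma (real (Suc j) + h)"
    define F where "F = (fact n :: real)"
    define J where "J = (fact j :: real)"
    define M where "M = (fact m :: real)"
    define S where "S = ((-1)^j :: real)"
    define P where "P = (4^j :: real)"
    have pos: "G > 0" "F > 0" "J > 0" "M > 0" "P > 0" using GS by (auto simp: G_def F_def J_def M_def P_def)
    have c1: "cQ h (m+1) (Suc j) = - S / (4 * P * ((j+1) * J) * ((n+1) * F) * G)"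
      using 1 unfolding cQ_def e1 by (simp add: S_def P_def J_def F_def G_def fact_Suc algebra_simps)
    have c2: "cQ (h+1) m (Suc j) = - S / (4 * P * ((j+1) * J) * F * ((j + 1 + h) * G))"
      using 1 unfolding cQ_def e1 G2 by (simp add: S_def P_def J_def F_def G_def fact_Suc algebra_simps)
    have c3: "cQ (h+1) m j = S / (P * J * ((n+2)*((n+1) * F)) * G)"
      using 1 unfolding cQ_def e1 G3 by (simp add: S_def P_def J_def F_def G_def fact_Suc algebra_simps)
    have fm: "fact (m+1) = (real n + 2 * j + 3) * M" using n by (simp add: M_def algebra_simps)
    have mj: "real (m - 2*j) = n + 2" using e1 by simp
    have q: "real j + 1 + h \<noteq> 0" "real j + 1 \<noteq> 0" "real n + 1 \<noteq> 0" "real n + 2 \<noteq> 0"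
      using h by linarith+
    have "-2*h*((real n + 2 * j + 3) * M)*Gamma h * (- S / (4 * P * ((j+1) * J) * ((n+1) * F) * G)) =
      M * (h * Gamma h) * ((- S / (4 * P * ((j+1) * J) * F * ((j + 1 + h) * G))) * (-2*(h + real (Suc j)))
       + S / (P * J * ((n+2)*((n+1) * F)) * G) * (n + 2))"
      using pos q by (simp add: divide_simps) (simp add: algebra_simps)
    then show ?thesis unfolding c1 c2 c3 fm mj G M_def[symmetric] .
  next
    case 2
    have e1: "m + 1 - 2 * Suc j = 0" "m - 2*j = 1" using 2 by auto
    have mm: "m = 2*j+1" using 2 by simp
    define G where "G = Gamma (real (Suc j) + h)"
    define J where "J = (fact j :: real)"
    define M where "M = (fact m :: real)"
    define S where "S = ((-1)^j :: real)"
    define P where "P = (4^j :: real)"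
    have pos: "G > 0" "J > 0" "M > 0" "P > 0" using GS by (auto simp: G_def J_def M_def P_def)
    have c1: "cQ h (m+1) (Suc j) = - S / (4 * P * ((j+1) * J) * G)"
      using 2 unfolding cQ_def e1 by (simp add: S_def P_def J_def G_def fact_Suc algebra_simps)
    have c2: "cQ (h+1) m (Suc j) = 0"
      using 2 unfolding cQ_def by simp
    have c3: "cQ (h+1) m j = S / (P * J * G)"
      using 2 unfolding cQ_def e1 G3 by (simp add: S_def P_def J_def G_def fact_Suc algebra_simps)
    have fm: "fact (m+1) = (2 * real j + 2) * M" using mm by (simp add: M_def algebra_simps)
    have q: "real j + 1 \<noteq> 0" by linarith
    have "-2*h*((2 * real j + 2) * M)*Gamma h * (- S / (4 * P * ((j+1) * J) * G)) =
      M * (h * Gamma h) * (0 * (-2*(h + real (Suc j))) + S / (P * J * G) * 1)"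
      using pos q by (simp add: divide_simps)
    then show ?thesis unfolding c1 c2 c3 fm e1 G M_def[symmetric] by simp
  next
    case 3
    then have "m - 2*j = 0 \<or> \<not> 2*j \<le> m" by auto
    then show ?thesis using 3 unfolding cQ_def by auto
  qed
qed

lemma key_sum:
  assumes h: "h > 0"
  shows "fact m * Gamma (h+1) * (\<Sum>k\<le>m. cQ (h+1) m k * (-2*(h+real k)*u^k*t^(m-2*k+1)
            + real (m-2*k) * u^(k+1) * t^(m-2*k-1)))
       = -2*h*fact(m+1)*Gamma h * (\<Sum>j\<le>m+1. cQ h (m+1) j * u^j * t^(m+1-2*j))"
proof -
  define A where "A k = cQ (h+1) m k * (-2*(h+real k)*u^k*t^(m-2*k+1))" for k
  define B where "B k = cQ (h+1) m k * (real (m-2*k) * u^(k+1) * t^(m-2*k-1))" for k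
  define R where "R j = cQ h (m+1) j * u^j * t^(m+1-2*j)" for j
  define K1 where "K1 = fact m * Gamma (h+1)"
  define K2 where "K2 = -2*h*fact(m+1)*Gamma h"
  have GP: "Gamma h > 0" "Gamma (h+1) > 0" using h by (auto intro!: Gamma_real_pos)
  have A0: "A (Suc m) = 0" by (simp add: A_def cQ_def)
  have sA: "(\<Sum>k\<le>m. A k) = A 0 + (\<Sum>k\<le>m. A (Suc k))"
    using sum.atMost_Suc_shift[of A m] A0 by simp
  have sR: "(\<Sum>j\<le>m+1. R j) = R 0 + (\<Sum>k\<le>m. R (Suc k))"
    using sum.atMost_Suc_shift[of R m] by simp
  have e0: "K2 * R 0 = K1 * A 0"
    unfolding K1_def K2_def R_def A_def cQ_def using GP h Gamma_plus1_real[of h]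
      fact_gt_zero[of m, where 'a=real] of_nat_0_le_iff[of m, where 'a=real]
    by (simp add: fact_Suc divide_simps)
  have eS: "K2 * R (Suc k) = K1 * (A (Suc k) + B k)" if "k \<le> m" for k
  proof -
    have t1: "cQ (h+1) m (Suc k) * t^(m-2*Suc k+1) = cQ (h+1) m (Suc k) * t^(m+1-2*Suc k)"
    proof (cases "2 * Suc k \<le> m")
      case True
      then have "m-2*Suc k+1 = m+1-2*Suc k" by arith
      then show ?thesis by simp
    qed (simp add: cQ_def)
    have t2: "cQ (h+1) m k * real (m-2*k) * t^(m-2*k-1) = cQ (h+1) m k * real (m-2*k) * t^(m+1-2*Suc k)"
    proof (cases "2 * k < m")
      case True
      then have "m-2*k-1 = m+1-2*Suc k" by arith
      then show ?thesis by simp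
    next
      case False
      then have "m - 2*k = 0 \<or> \<not> 2*k \<le> m" by arith
      then show ?thesis by (auto simp: cQ_def)
    qed
    have "K2 * R (Suc k) = (K2 * cQ h (m+1) (Suc k)) * (u^(Suc k) * t^(m+1-2*Suc k))"
      by (simp add: R_def)
    also have "K2 * cQ h (m+1) (Suc k) = K1 * (cQ (h+1) m (Suc k) * (-2*(h + real (Suc k)))
       + cQ (h+1) m k * real (m - 2*k))"
      using key_coeff[OF h that] by (simp add: K1_def K2_def)
    also have "K1 * (cQ (h+1) m (Suc k) * (-2*(h + real (Suc k))) + cQ (h+1) m k * real (m - 2*k))
          * (u^(Suc k) * t^(m+1-2*Suc k))
        = K1 * ((cQ (h+1) m (Suc k) * t^(m+1-2*Suc k)) * (-2*(h + real (Suc k))) * u^(Suc k)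
          + (cQ (h+1) m k * real (m - 2*k) * t^(m+1-2*Suc k)) * u^(Suc k))"
      by (simp add: algebra_simps)
    also have "\<dots> = K1 * (A (Suc k) + B k)"
      unfolding t1[symmetric] t2[symmetric] A_def B_def by (simp add: algebra_simps)
    finally show ?thesis .
  qed
  have "fact m * Gamma (h+1) * (\<Sum>k\<le>m. cQ (h+1) m k * (-2*(h+real k)*u^k*t^(m-2*k+1)
            + real (m-2*k) * u^(k+1) * t^(m-2*k-1))) = K1 * ((\<Sum>k\<le>m. A k) + (\<Sum>k\<le>m. B k))"
    by (simp add: K1_def A_def B_def sum.distrib[symmetric] algebra_simps)
  also have "\<dots> = K1 * A 0 + (\<Sum>k\<le>m. K1 * (A (Suc k) + B k))"
    unfolding sA by (simp add: sum.distrib sum_distrib_left algebra_simps)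
  also have "\<dots> = K2 * R 0 + (\<Sum>k\<le>m. K2 * R (Suc k))"
    using e0 eS by simp
  also have "\<dots> = K2 * (\<Sum>j\<le>m+1. R j)"
    unfolding sR by (simp add: sum_distrib_left algebra_simps)
  finally show ?thesis by (simp add: K2_def R_def mult.assoc)
qed

lemma term_deriv:
  assumes t: "-1 < t" "t < 1"
  shows "((\<lambda>t. (1-t\<^sup>2) powr h * (1-t\<^sup>2)^k * t^n) has_real_derivative
     (1-t\<^sup>2) powr (h-1) * (-2*(h+real k)*(1-t\<^sup>2)^k*t^(n+1) + real n*(1-t\<^sup>2)^(k+1)*t^(n-1))) (at t)"
proof -
  have u: "1 - t\<^sup>2 > 0" using t by (simp add: abs_square_less_1)
  have ph: "(1-t\<^sup>2) powr h = (1-t\<^sup>2) powr (h-1) * (1-t\<^sup>2)"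
    using u by (simp add: powr_diff)
  have pk: "real k * (1-t\<^sup>2)^(k-1) * (1-t\<^sup>2) = real k * (1-t\<^sup>2)^k"
    by (cases k) auto
  have pn: "real n * t^(n-1) * t = real n * t^n"
    by (cases n) auto
  have d1: "((\<lambda>t. (1-t\<^sup>2) powr h) has_real_derivative h * (1-t\<^sup>2) powr (h-1) * (-2*t)) (at t)"
    using DERIV_fun_powr[of "\<lambda>t. 1-t\<^sup>2" "-2*t" t h] u
    by (auto intro!: derivative_eq_intros)
  have d2: "((\<lambda>t. (1-t\<^sup>2)^k) has_real_derivative real k * (1-t\<^sup>2)^(k-1) * (-2*t)) (at t)"
    by (auto intro!: derivative_eq_intros)
  have d3: "((\<lambda>t. t^n) has_real_derivative real n * t^(n-1)) (at t)"
    by (auto intro!: derivative_eq_intros)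
  have "((\<lambda>t. (1-t\<^sup>2) powr h * (1-t\<^sup>2)^k * t^n) has_real_derivative
     (h * (1-t\<^sup>2) powr (h-1) * (-2*t) * (1-t\<^sup>2)^k + (1-t\<^sup>2) powr h * (real k * (1-t\<^sup>2)^(k-1) * (-2*t))) * t^n
      + (1-t\<^sup>2) powr h * (1-t\<^sup>2)^k * (real n * t^(n-1))) (at t)"
    using DERIV_mult[OF DERIV_mult[OF d1 d2] d3] by (simp add: algebra_simps)
  moreover have "(h * (1-t\<^sup>2) powr (h-1) * (-2*t) * (1-t\<^sup>2)^k + (1-t\<^sup>2) powr h * (real k * (1-t\<^sup>2)^(k-1) * (-2*t))) * t^n
      + (1-t\<^sup>2) powr h * (1-t\<^sup>2)^k * (real n * t^(n-1)) =
     (1-t\<^sup>2) powr (h-1) * (-2*(h+real k)*(1-t\<^sup>2)^k*t^(n+1) + real n*(1-t\<^sup>2)^(k+1)*t^(n-1))"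
  proof -
    have eq1: "(1-t\<^sup>2) powr h * (real k * (1-t\<^sup>2)^(k-1) * (-2*t)) * t^n
        = (1-t\<^sup>2) powr (h-1) * (-2 * real k * (1-t\<^sup>2)^k * t^(n+1))"
    proof -
      have gen: "B * (real k * U^(k-1)*(-2*t))*t^n = A*(-2*real k*U^k*t^(n+1))"
        if "B = A*U" "real k * U^(k-1)*U = real k * U^k" for A B U :: real
      proof -
        have "B * (real k * U^(k-1)*(-2*t))*t^n = A*(real k * U^(k-1)*U)*(-2*(t*t^n))"
          unfolding that(1) by (simp add: algebra_simps)
        also have "\<dots> = A*(-2*real k*U^k*t^(n+1))" unfolding that(2) by simp
        finally show ?thesis .
      qed
      show ?thesis by (rule gen[OF ph pk])
    qed
    have eq2: "(1-t\<^sup>2) powr h * (1-t\<^sup>2)^k * (real n * t^(n-1))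
        = (1-t\<^sup>2) powr (h-1) * (real n*(1-t\<^sup>2)^(k+1)*t^(n-1))"
      unfolding ph by (simp add: algebra_simps)
    have fin: "h*Ph1*(-2*t)*U^k*t^n + Ph1*(-2*real k*U^k*t^(n+1)) + Ph1*(real n*U^(k+1)*t^(n-1))
       = Ph1*(-2*(h+real k)*U^k*t^(n+1) + real n*U^(k+1)*t^(n-1))" for Ph1 U :: real
      by (simp add: algebra_simps)
    show ?thesis unfolding distrib_right eq1 eq2 by (rule fin)
  qed
  ultimately show ?thesis by simp
qed


lemma W_deriv:
  assumes h: "h > 0" and t: "-1 < t" "t < 1"
  shows "((\<lambda>t. (1-t\<^sup>2) powr h * Qp (h+1) m t) has_real_derivative
           (-2*h*(1-t\<^sup>2) powr (h-1) * Qp h (m+1) t)) (at t)"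
proof -
  define D where "D k = (1-t\<^sup>2) powr (h-1) * (-2*(h+real k)*(1-t\<^sup>2)^k*t^(m-2*k+1)
       + real (m-2*k)*(1-t\<^sup>2)^(k+1)*t^(m-2*k-1))" for k
  have eqf: "(\<lambda>t. (1-t\<^sup>2) powr h * Qp (h+1) m t) = (\<lambda>t. fact m * Gamma(h+1) *
      (\<Sum>k\<le>m. cQ (h+1) m k * ((1-t\<^sup>2) powr h * (1-t\<^sup>2)^k * t^(m-2*k))))"
    by (auto simp: Qp_def sum_distrib_left algebra_simps)
  have "((\<lambda>t. \<Sum>k\<le>m. cQ (h+1) m k * ((1-t\<^sup>2) powr h * (1-t\<^sup>2)^k * t^(m-2*k)))
      has_real_derivative (\<Sum>k\<le>m. cQ (h+1) m k * D k)) (at t)"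
    unfolding D_def by (intro DERIV_sum DERIV_cmult term_deriv t)
  then have "((\<lambda>t. (1-t\<^sup>2) powr h * Qp (h+1) m t) has_real_derivative
      fact m * Gamma(h+1) * (\<Sum>k\<le>m. cQ (h+1) m k * D k)) (at t)"
    unfolding eqf by (intro DERIV_cmult)
  moreover have "fact m * Gamma(h+1) * (\<Sum>k\<le>m. cQ (h+1) m k * D k)
      = (1-t\<^sup>2) powr (h-1) * (fact m * Gamma(h+1) * (\<Sum>k\<le>m. cQ (h+1) m k *
         (-2*(h+real k)*(1-t\<^sup>2)^k*t^(m-2*k+1) + real (m-2*k)*(1-t\<^sup>2)^(k+1)*t^(m-2*k-1))))"
    unfolding D_def by (simp add: sum_distrib_left algebra_simps)
  moreover have "\<dots> = -2*h*(1-t\<^sup>2) powr (h-1) * Qp h (m+1) t"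
    unfolding key_sum[OF h] Qp_def by (simp add: algebra_simps)
  ultimately show ?thesis by simp
qed



lemma Qp0: "h > 0 \<Longrightarrow> Qp h 0 t = 1"
  unfolding Qp_def cQ_def by (simp add: Gamma_real_pos[THEN less_imp_neq, symmetric])

lemma cont_Qp: "continuous_on S (Qp h m)"
  unfolding Qp_def by (intro continuous_intros)

lemma beta_pq:
  fixes p q :: real
  assumes p: "p > 0" and q: "q > 0"
  shows "((\<lambda>t. (1-t) powr (p-1) * (1+t) powr (q-1)) has_integral 2 powr (p+q-1) * Beta q p) {-1..1}"
proof -
  have "((\<lambda>x. (\<lambda>v. v powr (q-1) * (1-v) powr (p-1)) ((1/2) *\<^sub>R x + 1/2)) has_integral
       (Beta q p /\<^sub>R (1/2) ^ DIM(real))) (cbox ((0 - 1/2) /\<^sub>R (1/2)) ((1 - 1/2) /\<^sub>R (1/2)))"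
    by (rule has_integral_affinity') (use has_integral_Beta_real[OF q p] in auto)
  moreover have "(\<lambda>x. (\<lambda>v. v powr (q-1) * (1-v) powr (p-1)) ((1/2) *\<^sub>R x + 1/2))
      = (\<lambda>x. ((x+1)/2) powr (q-1) * ((1-x)/2) powr (p-1))"
    by (rule ext) (simp add: field_simps)
  ultimately have "((\<lambda>x. ((x+1)/2) powr (q-1) * ((1-x)/2) powr (p-1)) has_integral 2 * Beta q p) {-1..1}"
    by simp
  then have "((\<lambda>x. 2 powr (p+q-2) * (((x+1)/2) powr (q-1) * ((1-x)/2) powr (p-1))) has_integral
      2 powr (p+q-2) * (2 * Beta q p)) {-1..1}"
    by (rule has_integral_mult_right)
  moreover have "2 powr (p+q-2) * (2 * Beta q p) = 2 powr (p+q-1) * Beta q p"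
    by (simp add: powr_diff powr_add)
  moreover have "2 powr (p+q-2) * (((x+1)/2) powr (q-1) * ((1-x)/2) powr (p-1))
      = (1-x) powr (p-1) * (1+x) powr (q-1)" if "x \<in> {-1..1}" for x
  proof -
    have "((x+1)/2) powr (q-1) = (x+1) powr (q-1) / 2 powr (q-1)"
      using that by (simp add: powr_divide)
    moreover have "((1-x)/2) powr (p-1) = (1-x) powr (p-1) / 2 powr (p-1)"
      using that by (simp add: powr_divide)
    moreover have "2 powr (p+q-2) = 2 powr (q-1) * 2 powr (p-1)"
      by (simp add: powr_add[symmetric] algebra_simps)
    ultimately show ?thesis by (simp add: field_simps)
  qed
  ultimately show ?thesis
    by (metis (no_types, lifting) has_integral_eq)
qed

lemma w_has_integral:
  fixes h :: real
  assumes h: "h > 0"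
  shows "((\<lambda>t. (1-t\<^sup>2) powr (h-1)) has_integral 2 powr (2*h-1) * Beta h h) {-1..1}"
proof -
  have "(1-t\<^sup>2) powr (h-1) = (1-t) powr (h-1) * (1+t) powr (h-1)" if "t \<in> {-1..1}" for t
  proof -
    have "1-t\<^sup>2 = (1-t)*(1+t)" by (simp add: power2_eq_square algebra_simps)
    moreover have "0 \<le> 1-t" "0 \<le> 1+t" using that by auto
    ultimately show ?thesis by (simp add: powr_mult)
  qed
  moreover have "2 powr (h+h-1) = 2 powr (2*h-1)" by simp
  ultimately show ?thesis using beta_pq[OF h h]
    by (metis (no_types, lifting) has_integral_eq)
qed

lemma w_abs_int:
  fixes h :: real
  assumes h: "h > 0"
  shows "(\<lambda>t. (1-t\<^sup>2) powr (h-1)) absolutely_integrable_on {-1..1}"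
  by (rule nonnegative_absolutely_integrable_1) (use w_has_integral[OF h] in auto)


lemma w_times_cont_abs_int:
  fixes h :: real
  assumes h: "h > 0" and g: "continuous_on {-1..1} g"
  shows "(\<lambda>t. (1-t\<^sup>2) powr (h-1) * g t) absolutely_integrable_on {-1..1}"
proof -
  have "(\<lambda>t. g t * (1-t\<^sup>2) powr (h-1)) absolutely_integrable_on {-1..1}"
  proof (rule absolutely_integrable_bounded_measurable_product_real)
    show "g \<in> borel_measurable (lebesgue_on {-1..1})"
      by (rule continuous_imp_measurable_on_sets_lebesgue[OF g]) auto
    show "bounded (g ` {-1..1})"
      by (rule compact_imp_bounded, rule compact_continuous_image[OF g]) auto
  qed (use w_abs_int[OF h] in auto)
  then show ?thesis by (simp add: mult.commute)
qed

lemma cont_F: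
  fixes h :: real
  assumes h: "h > 0"
  shows "continuous_on {-1..1} (\<lambda>t. (1-t\<^sup>2) powr h * Qp (h+1) m t * exp(a*t))"
proof -
  have pos: "\<forall>x::real\<in>{-1..1}. 0 \<le> 1 - x\<^sup>2 \<and> (1 - x\<^sup>2 = 0 \<longrightarrow> 0 < h)"
  proof
    fix x :: real assume "x \<in> {-1..1}"
    then have "x\<^sup>2 \<le> 1" by (simp add: abs_square_le_1 abs_le_iff)
    then show "0 \<le> 1 - x\<^sup>2 \<and> (1 - x\<^sup>2 = 0 \<longrightarrow> 0 < h)" using h by simp
  qed
  have "continuous_on {-1..1} (\<lambda>t. (1-t\<^sup>2) powr h)"
    by (rule continuous_on_powr') (use pos in \<open>auto intro!: continuous_intros\<close>)
  moreover have "continuous_on {-1..1} (\<lambda>t. exp (a*t))" by (intro continuous_intros)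
  ultimately show ?thesis using continuous_on_mult[OF continuous_on_mult[OF _ cont_Qp]] by blast
qed

lemma ibp_step:
  fixes h a :: real
  assumes h: "h > 0"
  shows "((\<lambda>t. (1-t\<^sup>2) powr (h-1) * Qp h (Suc m) t * exp(a*t)) has_integral
     (a/(2*h)) * integral {-1..1} (\<lambda>t. (1-t\<^sup>2) powr h * Qp (h+1) m t * exp(a*t))) {-1..1}"
proof -
  define F where "F t = (1-t\<^sup>2) powr h * Qp (h+1) m t * exp(a*t)" for t
  have contF: "continuous_on {-1..1} F" unfolding F_def by (rule cont_F[OF h])
  have derF: "(F has_vector_derivative
       (-2*h*(1-x\<^sup>2) powr (h-1) * Qp h (m+1) x * exp(a*x) + a * F x)) (at x)"
    if "x \<in> {-1<..<1}" for x
  proof -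
    have "((\<lambda>t. (1-t\<^sup>2) powr h * Qp (h+1) m t * exp(a*t)) has_real_derivative
       (-2*h*(1-x\<^sup>2) powr (h-1) * Qp h (m+1) x) * exp(a*x) + ((1-x\<^sup>2) powr h * Qp (h+1) m x) * (exp(a*x) * a)) (at x)"
    proof -
      have e: "((\<lambda>t. exp(a*t)) has_real_derivative exp(a*x)*a) (at x)"
        by (auto intro!: derivative_eq_intros)
      show ?thesis using DERIV_mult[OF W_deriv[OF h, of x m] e] that by (simp add: algebra_simps)
    qed
    then show ?thesis unfolding F_def has_real_derivative_iff_has_vector_derivative[symmetric]
      by (simp add: algebra_simps)
  qed
  have I0: "((\<lambda>x. -2*h*(1-x\<^sup>2) powr (h-1) * Qp h (m+1) x * exp(a*x) + a * F x) has_integral (F 1 - F (-1))) {-1..1}"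
    by (rule fundamental_theorem_of_calculus_interior[OF _ contF derF]) auto
  have F1: "F 1 = 0" "F (-1) = 0" by (auto simp: F_def)
  have I2: "((\<lambda>x. a * F x) has_integral (a * integral {-1..1} F)) {-1..1}"
    by (intro has_integral_mult_right integrable_integral integrable_continuous_interval contF)
  have "((\<lambda>x. (-2*h*(1-x\<^sup>2) powr (h-1) * Qp h (m+1) x * exp(a*x) + a * F x) - a * F x)
      has_integral (0 - a * integral {-1..1} F)) {-1..1}"
    using has_integral_diff[OF I0 I2] unfolding F1 by simp
  then have "((\<lambda>x. -2*h*(1-x\<^sup>2) powr (h-1) * Qp h (m+1) x * exp(a*x))
      has_integral (0 - a * integral {-1..1} F)) {-1..1}"
    by simp
  then have "((\<lambda>x. (-1/(2*h)) * (-2*h*(1-x\<^sup>2) powr (h-1) * Qp h (m+1) x * exp(a*x)))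
      has_integral ((-1/(2*h)) * (0 - a * integral {-1..1} F))) {-1..1}"
    by (intro has_integral_mult_right) simp
  then show ?thesis using h unfolding F_def by (simp add: field_simps)
qed


lemma rodrigues_int:
  fixes a h :: real
  assumes "h > 0"
  shows "((\<lambda>t. (1-t\<^sup>2) powr (h-1) * Qp h m t * exp(a*t)) has_integral
     a^m / (2^m * pochhammer h m) * integral {-1..1} (\<lambda>t. (1-t\<^sup>2) powr (h + real m - 1) * exp(a*t))) {-1..1}"
  using assms
proof (induction m arbitrary: h)
  case 0
  have "(\<lambda>t. (1-t\<^sup>2) powr (h-1) * exp(a*t)) absolutely_integrable_on {-1..1}"
    by (intro w_times_cont_abs_int 0 continuous_intros)
  then have "(\<lambda>t. (1-t\<^sup>2) powr (h-1) * exp(a*t)) integrable_on {-1..1}"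
    using absolutely_integrable_on_def by blast
  then show ?case using 0 by (simp add: Qp0 integrable_integral)
next
  case (Suc m)
  have hp: "h + 1 > 0" using Suc.prems by simp
  have IH: "((\<lambda>t. (1-t\<^sup>2) powr h * Qp (h+1) m t * exp(a*t)) has_integral
     a^m / (2^m * pochhammer (h+1) m) * integral {-1..1} (\<lambda>t. (1-t\<^sup>2) powr (h + real (Suc m) - 1) * exp(a*t))) {-1..1}"
    using Suc.IH[OF hp] by (simp add: algebra_simps)
  have P: "pochhammer (h+1) m > 0" using hp by (intro pochhammer_pos)
  define J where "J = integral {-1..1} (\<lambda>t. (1-t\<^sup>2) powr (h + real (Suc m) - 1) * exp(a*t))"
  have X: "((\<lambda>t. (1-t\<^sup>2) powr (h-1) * Qp h (Suc m) t * exp(a*t)) has_integral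
     (a/(2*h)) * (a^m / (2^m * pochhammer (h+1) m) * J)) {-1..1}"
    using ibp_step[OF Suc.prems, of m a] integral_unique[OF IH] unfolding J_def by simp
  have "(a/(2*h)) * (a^m / (2^m * pochhammer (h+1) m) * J) = a^(Suc m) / (2^(Suc m) * pochhammer h (Suc m)) * J"
    using P Suc.prems by (simp add: pochhammer_rec field_simps)
  then show ?case using X unfolding J_def by simp
qed



lemma hk_lborel:
  fixes f :: "real \<Rightarrow> real"
  assumes S[measurable]: "S \<in> sets borel" and f[measurable]: "f \<in> borel_measurable borel"
    and nn: "\<And>x. x \<in> S \<Longrightarrow> 0 \<le> f x" and I: "(f has_integral I) S"
  shows "set_integrable lborel S f" "(LINT x:S|lborel. f x) = I"
proof -
  have N: "(\<integral>\<^sup>+x. ennreal (indicator S x * f x) \<partial>lborel) = ennreal I"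
    using nn_integral_has_integral_lebesgue[OF nn I] by simp
  have I0: "0 \<le> I" using has_integral_nonneg[OF I] nn by auto
  have nn2: "\<And>x. 0 \<le> indicator S x * f x" using nn by (auto simp: indicator_def)
  show 1: "set_integrable lborel S f" unfolding set_integrable_def
    by (rule integrableI_nonneg) (use N nn2 in auto)
  have "(LINT x:S|lborel. f x) = integral\<^sup>L lborel (\<lambda>x. indicator S x * f x)"
    by (simp add: set_lebesgue_integral_def)
  also have "\<dots> = enn2real (\<integral>\<^sup>+x. ennreal (indicator S x * f x) \<partial>lborel)"
    by (rule integral_eq_nn_integral) (use nn2 in auto)
  also have "\<dots> = I" using N I0 by simp
  finally show "(LINT x:S|lborel. f x) = I" .
qed

lemma gamma_lborel:
  fixes a :: real
  assumes a: "a > 0"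
  shows "set_integrable lborel {0<..} (\<lambda>y. y powr (a-1) * exp (-y))"
        "(LINT y:{0<..}|lborel. y powr (a-1) * exp (-y)) = Gamma a"
proof -
  have "((\<lambda>t. t powr (a - 1) / exp t) has_integral Gamma a) {0..}"
    by (rule Gamma_integral_real[OF a])
  then have "((\<lambda>t. t powr (a - 1) * exp (-t)) has_integral Gamma a) {0..}"
    by (simp add: exp_minus field_simps)
  then have H: "((\<lambda>t. t powr (a - 1) * exp (-t)) has_integral Gamma a) {0<..}"
  proof -
    assume A: "((\<lambda>t. t powr (a - 1) * exp (-t)) has_integral Gamma a) {0..}"
    have "negligible {x \<in> {0::real..} - {0<..}. x powr (a - 1) * exp (-x) \<noteq> 0}"
      by (rule negligible_subset[of "{0}"]) auto
    moreover have "negligible {x \<in> {0::real<..} - {0..}. x powr (a - 1) * exp (-x) \<noteq> 0}"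
      by (rule negligible_subset[of "{}"]) auto
    ultimately show ?thesis using A has_integral_spike_set_eq[of "{0..}" "{0<..}" "\<lambda>t. t powr (a - 1) * exp (- t)" "Gamma a"] by blast
  qed
  show "set_integrable lborel {0<..} (\<lambda>y. y powr (a-1) * exp (-y))"
       "(LINT y:{0<..}|lborel. y powr (a-1) * exp (-y)) = Gamma a"
    by (rule hk_lborel[OF _ _ _ H]; simp)+
qed


lemma set_integrable_mirror:
  fixes f :: "real \<Rightarrow> real"
  assumes "set_integrable lborel {0<..} f"
  shows "set_integrable lborel {..<0} (\<lambda>y. f (-y))"
proof -
  have "integrable lborel (\<lambda>x. indicator {0<..} (0 + (-1) * x) *\<^sub>R f (0 + (-1) * x))"
    using assms unfolding set_integrable_def by (intro lborel_integrable_real_affine) auto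
  moreover have "(\<lambda>x. indicator {0<..} (0 + (-1) * x) *\<^sub>R f (0 + (-1) * x)) =
      (\<lambda>x. indicator {..<0} x *\<^sub>R f (-x))"
    by (auto simp: indicator_def)
  ultimately show ?thesis unfolding set_integrable_def by simp
qed

definition psi :: "real \<Rightarrow> real \<Rightarrow> real" where
  "psi nu x = x powr (-nu-1) * exp (-1/x)"

lemma psi_integrable:
  fixes nu :: real
  assumes nu: "nu > 0"
  shows "set_integrable lborel {0<..} (psi nu)"
proof -
  have G: "set_integrable lborel {..<0} (\<lambda>y. (-y) powr (nu-1) * exp (-(-y)))"
    using set_integrable_mirror[OF gamma_lborel(1)[OF nu]] by simp
  have eq: "psi nu (-1/y) * (1/y\<^sup>2) = (-y) powr (nu-1) * exp (-(-y))" if "y < 0" for y :: real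
  proof -
    have "(-1/y) powr (-nu-1) = (-y) powr (nu+1)"
    proof -
      have a: "-1/y = 1/(-y)" by simp
      have "(1/(-y)) powr (-nu-1) = 1 powr (-nu-1) / (-y) powr (-nu-1)"
        using that by (intro powr_divide)
      also have "\<dots> = (-y) powr (nu+1)"
        using powr_minus[of "-y" "nu+1"] by (simp add: divide_inverse)
      finally show ?thesis unfolding a .
    qed
    moreover have "(-y) powr (nu+1) * (1/y\<^sup>2) = (-y) powr (nu-1)"
      using that by (simp add: powr_add powr_diff power2_eq_square divide_simps)
    ultimately show ?thesis unfolding psi_def using that by (simp add: field_simps)
  qed
  have M: "set_integrable lborel (einterval (-\<infinity>) 0) (\<lambda>y. psi nu (-1/y) * (1/y\<^sup>2))"
  proof -
    have "einterval (-\<infinity>) 0 = {..<(0::real)}" by (auto simp: einterval_def zero_ereal_def)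
    moreover have "set_integrable lborel {..<0} (\<lambda>y. psi nu (-1/y) * (1/y\<^sup>2))"
      using G set_integrable_cong[of lborel lborel "{..<0}" "{..<0}" "\<lambda>y. psi nu (-1/y) * (1/y\<^sup>2)"
          "\<lambda>y. (-y) powr (nu-1) * exp (-(-y))"] eq by auto
    ultimately show ?thesis by simp
  qed
  have "set_integrable lborel (einterval 0 \<infinity>) (psi nu)"
  proof (rule interval_integral_substitution_nonneg(1)[where a="-\<infinity>" and b=0 and g="\<lambda>y. -1/y"
        and g'="\<lambda>y. 1/y\<^sup>2" and A=0 and B="\<infinity>"])
    show "-\<infinity> < (0::ereal)" by simp
    show "DERIV (\<lambda>y. -1/y) x :> 1/x\<^sup>2" if "-\<infinity> < ereal x" "ereal x < 0" for x
      using that by (auto intro!: derivative_eq_intros simp: power2_eq_square zero_ereal_def)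
    show "isCont (psi nu) (-1/x)" if "-\<infinity> < ereal x" "ereal x < 0" for x
      using that unfolding psi_def by (auto intro!: continuous_intros simp: zero_ereal_def)
    show "isCont (\<lambda>y. 1/y\<^sup>2) x" if "-\<infinity> < ereal x" "ereal x < 0" for x
      using that by (auto intro!: continuous_intros simp: zero_ereal_def)
    show "0 \<le> psi nu (-1/x)" if "-\<infinity> < ereal x" "ereal x < 0" for x
      unfolding psi_def by simp
    show "0 \<le> 1/x\<^sup>2" for x :: real by simp
    show "((ereal \<circ> (\<lambda>y. -1/y) \<circ> real_of_ereal) \<longlongrightarrow> 0) (at_right (-\<infinity>))"
      unfolding zero_ereal_def o_assoc[symmetric] ereal_tendsto_simps by real_asymp
    show "((ereal \<circ> (\<lambda>y. -1/y) \<circ> real_of_ereal) \<longlongrightarrow> \<infinity>) (at_left 0)"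
      unfolding zero_ereal_def ereal_tendsto_simps1 unfolding ereal_tendsto_simps2 by real_asymp
    show "set_integrable lborel (einterval (-\<infinity>) 0) (\<lambda>x. psi nu (-1/x) * (1/x\<^sup>2))"
      by (rule M)
  qed
  moreover have "einterval 0 \<infinity> = {0::real<..}" by (auto simp: einterval_def zero_ereal_def)
  ultimately show ?thesis by simp
qed


lemma set_integrable_le:
  fixes f g :: "real \<Rightarrow> real"
  assumes g: "set_integrable lborel A g" and A: "A \<in> sets borel" and f[measurable]: "f \<in> borel_measurable borel"
    and le: "\<And>x. x \<in> A \<Longrightarrow> \<bar>f x\<bar> \<le> g x"
  shows "set_integrable lborel A f"
  unfolding set_integrable_def
proof (rule Bochner_Integration.integrable_bound)
  show "integrable lborel (\<lambda>x. indicator A x *\<^sub>R g x)" using g by (simp add: set_integrable_def)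
  show "(\<lambda>x. indicator A x *\<^sub>R f x) \<in> borel_measurable lborel" using A by measurable
  show "AE x in lborel. norm (indicator A x *\<^sub>R f x) \<le> norm (indicator A x *\<^sub>R g x)"
    using le by (auto simp: indicator_def intro!: AE_I2 order.trans[OF _ abs_ge_self])
qed

lemma psi_nonneg: "0 \<le> psi nu x" unfolding psi_def by simp

lemma psi_measurable[measurable]: "psi nu \<in> borel_measurable borel"
  unfolding psi_def by measurable

lemma psi_exp_integrable:
  fixes nu b :: real
  assumes nu: "nu > 0" and b: "b \<ge> 0"
  shows "set_integrable lborel {0<..} (\<lambda>x. psi nu x * exp (- b * x))"
proof (rule set_integrable_le[OF psi_integrable[OF nu]])
  show "\<bar>psi nu x * exp (- b * x)\<bar> \<le> psi nu x" if "x \<in> {0<..}" for x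
  proof -
    have "exp (- b * x) \<le> 1" using that b by simp
    then show ?thesis using psi_nonneg[of nu x] by (simp add: abs_mult mult_left_le)
  qed
qed auto


lemma bessel_subst:
  fixes nu z :: real
  assumes nu: "nu > 0" and z: "z > 0"
  shows "integrable lborel (\<lambda>t. exp (- z * cosh t) * exp (- nu * t))"
    "(\<integral>t. exp (- z * cosh t) * exp (- nu * t) \<partial>lborel) =
       (z/2) powr (-nu) * (LINT x:{0<..}|lborel. psi nu x * exp (- (z\<^sup>2/4) * x))"
proof -
  define F where "F t = exp (- z * cosh t) * exp (- nu * t)" for t
  have eq: "F (ln (z*x/2)) * (1/x) = (z/2) powr (-nu) * (psi nu x * exp (- (z\<^sup>2/4) * x))"
    if x: "x > 0" for x
  proof -
    have u: "z*x/2 > 0" using x z by simp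
    have c: "z * cosh (ln (z*x/2)) = (z\<^sup>2/4) * x + 1/x"
      using u x z by (simp add: cosh_ln_real field_simps power2_eq_square)
    have e: "exp (- nu * ln (z*x/2)) = (z/2) powr (-nu) * x powr (-nu)"
    proof -
      have zx: "z*x/2 = (z/2) * x" by simp
      have "exp (- nu * ln (z*x/2)) = (z*x/2) powr (-nu)" using u x z by (simp add: powr_def)
      moreover have "((z/2) * x) powr (-nu) = (z/2) powr (-nu) * x powr (-nu)"
        using x z by (intro powr_mult)
      ultimately show ?thesis unfolding zx by simp
    qed
    have p: "x powr (-nu) * (1/x) = x powr (-nu-1)"
      using x by (simp add: powr_diff divide_simps)
    have c': "exp (- z * cosh (ln (z*x/2))) = exp (-1/x) * exp (- (z\<^sup>2/4) * x)"
    proof -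
      have "- z * cosh (ln (z*x/2)) = -1/x + (- (z\<^sup>2/4) * x)" using c by simp
      then show ?thesis by (simp add: exp_add[symmetric])
    qed
    have "F (ln (z*x/2)) * (1/x) = (z/2) powr (-nu) * ((x powr (-nu) * (1/x)) * exp (-1/x) * exp (- (z\<^sup>2/4) * x))"
      unfolding F_def c' e by (simp add: algebra_simps)
    then show ?thesis unfolding p psi_def by (simp add: algebra_simps)
  qed
  have intx: "set_integrable lborel (einterval 0 \<infinity>) (\<lambda>x. F (ln (z*x/2)) * (1/x))"
  proof -
    have "set_integrable lborel {0<..} (\<lambda>x. (z/2) powr (-nu) * (psi nu x * exp (- (z\<^sup>2/4) * x)))"
      by (intro set_integrable_mult_right psi_exp_integrable nu) simp
    then have "set_integrable lborel {0<..} (\<lambda>x. F (ln (z*x/2)) * (1/x))"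
      using set_integrable_cong[of lborel lborel "{0<..}" "{0<..}" "\<lambda>x. F (ln (z*x/2)) * (1/x)"
          "\<lambda>x. (z/2) powr (-nu) * (psi nu x * exp (- (z\<^sup>2/4) * x))"] eq by auto
    then show ?thesis by (simp add: zero_ereal_def)
  qed
  have a1: "0 < (\<infinity>::ereal)" by simp
  have a2: "DERIV (\<lambda>x. ln (z*x/2)) x :> 1/x" if "0 < ereal x" "ereal x < \<infinity>" for x
    using that z by (auto intro!: derivative_eq_intros simp: zero_ereal_def)
  have a3: "isCont F (ln (z*x/2))" if "0 < ereal x" "ereal x < \<infinity>" for x
    unfolding F_def by (intro continuous_intros)
  have a4: "isCont (\<lambda>x. 1/x) x" if "0 < ereal x" "ereal x < \<infinity>" for x
    using that by (auto intro!: continuous_intros simp: zero_ereal_def)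
  have a5: "0 \<le> F (ln (z*x/2))" if "0 < ereal x" "ereal x < \<infinity>" for x unfolding F_def by simp
  have a6: "0 \<le> 1/x" if "0 \<le> ereal x" "ereal x \<le> \<infinity>" for x using that by (simp add: zero_ereal_def)
  have a7: "((ereal \<circ> (\<lambda>x. ln (z*x/2)) \<circ> real_of_ereal) \<longlongrightarrow> -\<infinity>) (at_right 0)"
    unfolding zero_ereal_def ereal_tendsto_simps1 unfolding ereal_tendsto_simps2 using z by real_asymp
  have a8: "((ereal \<circ> (\<lambda>x. ln (z*x/2)) \<circ> real_of_ereal) \<longlongrightarrow> \<infinity>) (at_left \<infinity>)"
    unfolding ereal_tendsto_simps1 unfolding ereal_tendsto_simps2 using z by real_asymp
  note S = interval_integral_substitution_nonneg[where a=0 and b="\<infinity>" and g="\<lambda>x. ln (z*x/2)"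
        and g'="\<lambda>x. 1/x" and A="-\<infinity>" and B="\<infinity>" and f=F, OF a1 a2 a3 a4 a5 a6 a7 a8 intx]
  show "integrable lborel (\<lambda>t. exp (- z * cosh t) * exp (- nu * t))"
    using S(1) unfolding F_def set_integrable_def by simp
  have "(\<integral>t. F t \<partial>lborel) = (LBINT x=-\<infinity>..\<infinity>. F x)"
    by (simp add: interval_lebesgue_integral_def set_lebesgue_integral_def)
  also have "\<dots> = (LBINT x=0..\<infinity>. F (ln (z*x/2)) * (1/x))" using S(2) by simp
  also have "\<dots> = (LINT x:{0<..}|lborel. F (ln (z*x/2)) * (1/x))"
    by (simp add: interval_lebesgue_integral_def zero_ereal_def)
  also have "\<dots> = (LINT x:{0<..}|lborel. (z/2) powr (-nu) * (psi nu x * exp (- (z\<^sup>2/4) * x)))"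
    by (rule set_lebesgue_integral_cong) (use eq in auto)
  also have "\<dots> = (z/2) powr (-nu) * (LINT x:{0<..}|lborel. psi nu x * exp (- (z\<^sup>2/4) * x))"
    by (rule set_integral_mult_right)
  finally show "(\<integral>t. exp (- z * cosh t) * exp (- nu * t) \<partial>lborel) =
       (z/2) powr (-nu) * (LINT x:{0<..}|lborel. psi nu x * exp (- (z\<^sup>2/4) * x))"
    unfolding F_def .
qed


lemma bessel_eq:
  fixes nu z :: real
  assumes nu: "nu > 0" and z: "z > 0"
  shows "besselK nu z = (1/2) * (z/2) powr (-nu) * (LINT x:{0<..}|lborel. psi nu x * exp (- (z\<^sup>2/4) * x))"
proof -
  define F where "F t = exp (- z * cosh t) * exp (- nu * t)" for t
  define Fe where "Fe t = exp (- z * cosh t) * cosh (nu * t)" for t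
  have Fm[measurable]: "F \<in> borel_measurable borel"
    unfolding F_def by (intro borel_measurable_continuous_onI continuous_intros)
  have Fem[measurable]: "Fe \<in> borel_measurable borel"
    unfolding Fe_def by (intro borel_measurable_continuous_onI continuous_intros)
  have IF: "integrable lborel F" using bessel_subst(1)[OF nu z] unfolding F_def .
  have IFm: "integrable lborel (\<lambda>t. F (-t))"
    using lborel_integrable_real_affine[OF IF, of "-1" 0] by simp
  have Fe_eq: "Fe t = (F t + F (-t)) / 2" for t
    unfolding Fe_def F_def cosh_def by (simp add: algebra_simps exp_add[symmetric] add_divide_distrib)
  have IFe: "integrable lborel Fe"
    unfolding Fe_eq by (intro integrable_divide Bochner_Integration.integrable_add IF IFm)
  have Fe_even: "Fe (-t) = Fe t" for t unfolding Fe_def by simp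
  have m1: "(\<integral>t. F (-t) \<partial>lborel) = (\<integral>t. F t \<partial>lborel)"
    using lborel_integral_real_affine[of "-1" F 0] by simp
  have "(\<integral>t. Fe t \<partial>lborel) = ((\<integral>t. F t \<partial>lborel) + (\<integral>t. F (-t) \<partial>lborel)) / 2"
    unfolding Fe_eq using IF IFm by simp
  then have e1: "(\<integral>t. Fe t \<partial>lborel) = (\<integral>t. F t \<partial>lborel)" using m1 by simp
  have I1: "integrable lborel (\<lambda>t. indicator {0..} t * Fe t)"
    using integrable_mult_indicator[OF _ IFe, of "{0..}"] by simp
  have I2: "integrable lborel (\<lambda>t. indicator {..<0} t * Fe t)"
    using integrable_mult_indicator[OF _ IFe, of "{..<0}"] by simp
  have "(\<integral>t. Fe t \<partial>lborel) = (\<integral>t. indicator {0..} t * Fe t + indicator {..<0} t * Fe t \<partial>lborel)"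
    by (rule Bochner_Integration.integral_cong) (auto simp: indicator_def)
  also have "\<dots> = (\<integral>t. indicator {0..} t * Fe t \<partial>lborel) + (\<integral>t. indicator {..<0} t * Fe t \<partial>lborel)"
    using I1 I2 by simp
  also have "(\<integral>t. indicator {..<0} t * Fe t \<partial>lborel) = (\<integral>t. indicator {..<0} (-t) * Fe (-t) \<partial>lborel)"
    using lborel_integral_real_affine[of "-1" "\<lambda>t. indicator {..<0} t * Fe t" 0] by simp
  also have "\<dots> = (\<integral>t. indicator {0<..} t * Fe t \<partial>lborel)"
    by (rule Bochner_Integration.integral_cong) (auto simp: indicator_def Fe_even)
  also have "\<dots> = (LINT t:{0<..}|lborel. Fe t)" by (simp add: set_lebesgue_integral_def)
  also have "\<dots> = (LINT t:{0..}|lborel. Fe t)"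
    by (rule set_integral_discrete_difference[where X="{0}"]) auto
  also have "(\<integral>t. indicator {0..} t * Fe t \<partial>lborel) = (LINT t:{0..}|lborel. Fe t)"
    by (simp add: set_lebesgue_integral_def)
  finally have e2: "(\<integral>t. Fe t \<partial>lborel) = 2 * (LINT t:{0..}|lborel. Fe t)" by simp
  have si: "set_integrable lborel {0..} Fe"
    unfolding set_integrable_def using I1 by simp
  have "besselK nu z = integral {0..} Fe" unfolding besselK_def Fe_def ..
  also have "\<dots> = (LINT t:{0..}|lborel. Fe t)" using set_borel_integral_eq_integral(2)[OF si] by simp
  also have "\<dots> = (1/2) * (\<integral>t. F t \<partial>lborel)" using e1 e2 by simp
  also have "\<dots> = (1/2) * (z/2) powr (-nu) * (LINT x:{0<..}|lborel. psi nu x * exp (- (z\<^sup>2/4) * x))"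
    using bessel_subst(2)[OF nu z] unfolding F_def by simp
  finally show ?thesis .
qed



lemma abs_int_lborel:
  fixes f :: "real \<Rightarrow> real"
  assumes f: "f absolutely_integrable_on S" and S[measurable]: "S \<in> sets borel"
    and fm[measurable]: "f \<in> borel_measurable borel"
  shows "set_integrable lborel S f"
  using f unfolding set_integrable_def
  by (subst (asm) integrable_completion) measurable

lemma Qp_measurable[measurable]: "Qp h m \<in> borel_measurable borel"
  by (rule borel_measurable_continuous_onI[OF cont_Qp])

lemma w_measurable[measurable]: "(\<lambda>t::real. (1-t\<^sup>2) powr p) \<in> borel_measurable borel"
  by measurable

lemma Pw_int:
  fixes h :: real
  assumes h: "h > 0" and g: "continuous_on UNIV g"
  shows "set_integrable lborel {-1<..<1} (\<lambda>t. (1-t\<^sup>2) powr (h-1) * g t)"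
proof -
  have "set_integrable lborel {-1..1} (\<lambda>t. (1-t\<^sup>2) powr (h-1) * g t)"
  proof (rule abs_int_lborel)
    show "(\<lambda>t. (1-t\<^sup>2) powr (h-1) * g t) absolutely_integrable_on {-1..1}"
      by (rule w_times_cont_abs_int[OF h]) (rule continuous_on_subset[OF g], simp)
    have "g \<in> borel_measurable borel" by (rule borel_measurable_continuous_onI[OF g])
    then show "(\<lambda>t. (1-t\<^sup>2) powr (h-1) * g t) \<in> borel_measurable borel" by measurable
  qed simp
  then show ?thesis by (rule set_integrable_subset) auto
qed


lemma fubini_main:
  fixes h c nu :: real and k :: "real \<Rightarrow> real"
  assumes h: "h > 0" and nu: "nu > 0" and c: "c > 0"
    and kt: "\<And>t. t \<in> {-1<..<1} \<Longrightarrow>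
       k t = (1/Gamma nu) * (LINT x:{0<..}|lborel. psi nu x * exp (- (c*(1-t)) * x))"
  shows "integral {-1..1} (\<lambda>t. Qp h m t * k t * (1-t\<^sup>2) powr (h-1)) =
     (1/Gamma nu) * (LINT x:{0<..}|lborel. psi nu x *
        integral {-1..1} (\<lambda>t. (1-t\<^sup>2) powr (h-1) * Qp h m t * exp (- (c*(1-t)) * x)))"
proof -
  define H where "H t x = indicator {-1<..<1} t * indicator {0<..} x *
     (Qp h m t * (1-t\<^sup>2) powr (h-1) * (psi nu x * exp (- (c*(1-t)) * x)))" for t x :: real
  define B where "B t = indicator {-1<..<1} t * (\<bar>Qp h m t\<bar> * (1-t\<^sup>2) powr (h-1))" for t :: real
  define Kp where "Kp = (LINT x:{0<..}|lborel. psi nu x)"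
  have Hm[measurable]: "(\<lambda>(t,x). H t x) \<in> borel_measurable (lborel \<Otimes>\<^sub>M lborel)"
    unfolding H_def by measurable
  have IB: "integrable lborel B"
  proof -
    have "set_integrable lborel {-1<..<1} (\<lambda>t. (1-t\<^sup>2) powr (h-1) * \<bar>Qp h m t\<bar>)"
      by (intro Pw_int h continuous_intros cont_Qp)
    then show ?thesis unfolding set_integrable_def B_def by (simp add: mult_ac)
  qed
  have Ipsi: "integrable lborel (\<lambda>x. indicator {0<..} x * psi nu x)"
    using psi_integrable[OF nu] unfolding set_integrable_def by simp
  define Bp where "Bp t x = B t * (indicator {0<..} x * psi nu x)" for t x :: real
  have Bpm[measurable]: "(\<lambda>(t,x). Bp t x) \<in> borel_measurable (lborel \<Otimes>\<^sub>M lborel)"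
    unfolding Bp_def B_def by measurable
  have IBp: "integrable (lborel \<Otimes>\<^sub>M lborel) (\<lambda>(t,x). Bp t x)"
  proof (rule lborel_pair.Fubini_integrable)
    have "(\<lambda>t. \<integral>x. norm ((\<lambda>(t,x). Bp t x) (t, x)) \<partial>lborel) = (\<lambda>t. B t * Kp)"
    proof
      fix t
      have "(\<integral>x. norm ((\<lambda>(t,x). Bp t x) (t, x)) \<partial>lborel) = (\<integral>x. B t * (indicator {0<..} x * psi nu x) \<partial>lborel)"
        unfolding Bp_def B_def
        by (rule Bochner_Integration.integral_cong) (auto simp: indicator_def abs_mult psi_nonneg)
      also have "\<dots> = B t * Kp" unfolding Kp_def set_lebesgue_integral_def by simp
      finally show "(\<integral>x. norm ((\<lambda>(t,x). Bp t x) (t, x)) \<partial>lborel) = B t * Kp" .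
    qed
    then show "integrable lborel (\<lambda>t. \<integral>x. norm ((\<lambda>(t,x). Bp t x) (t, x)) \<partial>lborel)"
      using IB by simp
    show "AE t in lborel. integrable lborel (\<lambda>x. (\<lambda>(t,x). Bp t x) (t, x))"
      unfolding Bp_def using Ipsi by simp
  qed simp
  have IH: "integrable (lborel \<Otimes>\<^sub>M lborel) (\<lambda>(t,x). H t x)"
  proof (rule Bochner_Integration.integrable_bound[OF IBp Hm])
    show "AE y in lborel \<Otimes>\<^sub>M lborel. norm ((\<lambda>(t,x). H t x) y) \<le> norm ((\<lambda>(t,x). Bp t x) y)"
    proof (rule AE_I2, clarify)
      fix t x :: real
      have "exp (- (c*(1-t)) * x) \<le> 1" if "t \<in> {-1<..<1}" "x \<in> {0<..}"
        using that c by (simp add: mult_nonneg_nonneg)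
      then show "norm (H t x) \<le> norm (Bp t x)"
        unfolding H_def Bp_def B_def using psi_nonneg[of nu x]
        by (auto simp: indicator_def abs_mult intro!: mult_left_le mult_left_mono)
    qed
  qed
  note FUB = lborel_pair.Fubini_integral[OF IH]
  have Gp: "Gamma nu > 0" using nu by (rule Gamma_real_pos)
  define f where "f t = Qp h m t * k t * (1-t\<^sup>2) powr (h-1)" for t
  have inner1: "(\<integral>x. H t x \<partial>lborel) = indicator {-1<..<1} t * (Gamma nu * f t)" for t
  proof (cases "t \<in> {-1<..<1}")
    case True
    have "(\<integral>x. H t x \<partial>lborel) = Qp h m t * (1-t\<^sup>2) powr (h-1) *
        (\<integral>x. indicator {0<..} x * (psi nu x * exp (- (c*(1-t)) * x)) \<partial>lborel)"
    proof -
      have "(\<lambda>x. H t x) = (\<lambda>x. (Qp h m t * (1-t\<^sup>2) powr (h-1)) *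
          (indicator {0<..} x * (psi nu x * exp (- (c*(1-t)) * x))))"
        using True by (auto simp: H_def fun_eq_iff)
      then show ?thesis by (simp only: integral_mult_right_zero)
    qed
    also have "(\<integral>x. indicator {0<..} x * (psi nu x * exp (- (c*(1-t)) * x)) \<partial>lborel) = Gamma nu * k t"
      using kt[OF True] Gp by (simp add: set_lebesgue_integral_def)
    finally show ?thesis using True unfolding f_def by (simp add: mult_ac)
  qed (simp add: H_def)
  have "integrable lborel (\<lambda>t. \<integral>x. (\<lambda>(t,x). H t x) (t, x) \<partial>lborel)"
    by (rule lborel_pair.integrable_fst'[OF IH])
  then have "integrable lborel (\<lambda>t. indicator {-1<..<1} t * (Gamma nu * f t))"
    using inner1 by simp
  then have "set_integrable lborel {-1<..<1} (\<lambda>t. Gamma nu * f t)"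
    unfolding set_integrable_def by simp
  then have "set_integrable lborel {-1<..<1} (\<lambda>t. (1/Gamma nu) * (Gamma nu * f t))"
    by (rule set_integrable_mult_right)
  then have sif: "set_integrable lborel {-1<..<1} f" using Gp by simp
  have L: "(\<integral>t. \<integral>x. H t x \<partial>lborel \<partial>lborel) = Gamma nu * integral {-1..1} f"
  proof -
    have "(\<integral>t. \<integral>x. H t x \<partial>lborel \<partial>lborel) = (\<integral>t. indicator {-1<..<1} t * (Gamma nu * f t) \<partial>lborel)"
      unfolding inner1 ..
    also have "\<dots> = Gamma nu * (LINT t:{-1<..<1}|lborel. f t)"
      by (simp add: set_lebesgue_integral_def mult_ac)
    also have "(LINT t:{-1<..<1}|lborel. f t) = integral {-1<..<1} f"
      by (rule set_borel_integral_eq_integral(2)[OF sif])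
    also have "integral {-1<..<1} f = integral {-1..1} f"
      using set_borel_integral_eq_integral(1)[OF sif]
      by (metis has_integral_Icc_iff_Ioo integrable_integral integral_unique)
    finally show ?thesis .
  qed
  define g where "g x t = (1-t\<^sup>2) powr (h-1) * Qp h m t * exp (- (c*(1-t)) * x)" for x t
  have inner2: "(\<integral>t. H t x \<partial>lborel) = indicator {0<..} x * (psi nu x * integral {-1..1} (g x))" for x
  proof -
    have si: "set_integrable lborel {-1<..<1} (g x)"
      unfolding g_def using Pw_int[OF h, of "\<lambda>t. Qp h m t * exp (- (c*(1-t)) * x)"]
      by (simp add: mult_ac continuous_intros cont_Qp)
    have "(\<integral>t. H t x \<partial>lborel) = indicator {0<..} x * psi nu x * (LINT t:{-1<..<1}|lborel. g x t)"
      unfolding H_def g_def set_lebesgue_integral_def by (simp add: mult_ac)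
    also have "(LINT t:{-1<..<1}|lborel. g x t) = integral {-1<..<1} (g x)"
      by (rule set_borel_integral_eq_integral(2)[OF si])
    also have "integral {-1<..<1} (g x) = integral {-1..1} (g x)"
      using set_borel_integral_eq_integral(1)[OF si]
      by (metis has_integral_Icc_iff_Ioo integrable_integral integral_unique)
    finally show ?thesis by (simp add: mult_ac)
  qed
  have R: "(\<integral>x. \<integral>t. H t x \<partial>lborel \<partial>lborel) =
      (LINT x:{0<..}|lborel. psi nu x * integral {-1..1} (g x))"
    unfolding inner2 set_lebesgue_integral_def by simp
  show ?thesis using FUB L R Gp unfolding f_def g_def by (simp add: field_simps)
qed


lemma gamma_scaled_nn:
  fixes a b :: real
  assumes a: "a > 0" and b: "b > 0"
  shows "(\<integral>\<^sup>+x. ennreal (indicator {0<..} x * x powr (a-1) * exp (- b * x)) \<partial>lborel) = ennreal (Gamma a / b powr a)"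
proof -
  define f where "f t = ennreal (indicator {0..} t * t powr (a - 1) / exp t)" for t :: real
  have fm: "f \<in> borel_measurable borel" unfolding f_def by measurable
  have "ennreal (Gamma a) = (\<integral>\<^sup>+t. f t \<partial>lborel)" unfolding f_def by (rule Gamma_conv_nn_integral_real[OF a])
  also have "\<dots> = ennreal \<bar>b\<bar> * (\<integral>\<^sup>+x. f (0 + b * x) \<partial>lborel)"
    using nn_integral_real_affine[OF fm, of b 0] b by simp
  also have "(\<integral>\<^sup>+x. f (0 + b * x) \<partial>lborel) =
      (\<integral>\<^sup>+x. ennreal (b powr (a-1)) * ennreal (indicator {0<..} x * x powr (a-1) * exp (- b * x)) \<partial>lborel)"
  proof (rule nn_integral_cong)
    fix x :: real
    show "f (0 + b * x) = ennreal (b powr (a-1)) * ennreal (indicator {0<..} x * x powr (a-1) * exp (- b * x))"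
    proof (cases "x > 0")
      case True
      then show ?thesis unfolding f_def using b
        by (simp add: ennreal_mult'[symmetric] powr_mult exp_minus divide_simps indicator_def)
    next
      case False
      then show ?thesis unfolding f_def using b
        by (auto simp: indicator_def zero_le_mult_iff)
    qed
  qed
  also have "\<dots> = ennreal (b powr (a-1)) * (\<integral>\<^sup>+x. ennreal (indicator {0<..} x * x powr (a-1) * exp (- b * x)) \<partial>lborel)"
    by (rule nn_integral_cmult) measurable
  finally have E: "ennreal (Gamma a) = ennreal (b powr a) * (\<integral>\<^sup>+x. ennreal (indicator {0<..} x * x powr (a-1) * exp (- b * x)) \<partial>lborel)"
    using b by (simp add: ennreal_mult'[symmetric] mult.assoc[symmetric] powr_diff)
  have bp: "b powr a > 0" using b by simp
  have "ennreal (Gamma a / b powr a) = ennreal (1 / b powr a) * ennreal (Gamma a)"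
    using bp by (simp add: ennreal_mult'[symmetric])
  also have "\<dots> = (ennreal (1 / b powr a) * ennreal (b powr a)) * (\<integral>\<^sup>+x. ennreal (indicator {0<..} x * x powr (a-1) * exp (- b * x)) \<partial>lborel)"
    unfolding E by (simp add: mult.assoc)
  also have "ennreal (1 / b powr a) * ennreal (b powr a) = 1"
    using bp by (simp add: ennreal_mult'[symmetric])
  finally show ?thesis by simp
qed


lemma beta_nn:
  fixes p q :: real
  assumes p: "p > 0" and q: "q > 0"
  shows "(\<integral>\<^sup>+t. ennreal (indicator {-1<..<1} t * ((1-t) powr (p-1) * (1+t) powr (q-1))) \<partial>lborel)
     = ennreal (2 powr (p+q-1) * Beta q p)"
proof -
  have "((\<lambda>t. (1-t) powr (p-1) * (1+t) powr (q-1)) has_integral 2 powr (p+q-1) * Beta q p) {-1<..<1}"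
    using beta_pq[OF p q] by (simp add: has_integral_Icc_iff_Ioo)
  from nn_integral_has_integral_lebesgue[OF _ this] show ?thesis by simp
qed

lemma cont_wq:
  fixes q :: real
  assumes q: "q > 0"
  shows "continuous_on {-1..1} (\<lambda>t. (1-t\<^sup>2) powr q)"
proof -
  have pos: "\<forall>x::real\<in>{-1..1}. 0 \<le> 1 - x\<^sup>2 \<and> (1 - x\<^sup>2 = 0 \<longrightarrow> 0 < q)"
  proof
    fix x :: real assume "x \<in> {-1..1}"
    then have "x\<^sup>2 \<le> 1" by (simp add: abs_square_le_1 abs_le_iff)
    then show "0 \<le> 1 - x\<^sup>2 \<and> (1 - x\<^sup>2 = 0 \<longrightarrow> 0 < q)" using q by simp
  qed
  show ?thesis
    by (rule continuous_on_powr') (use pos in \<open>auto intro!: continuous_intros\<close>)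
qed

lemma int_g_eq:
  fixes h c x :: real
  assumes h: "h > 0"
  shows "integral {-1..1} (\<lambda>t. (1-t\<^sup>2) powr (h-1) * Qp h m t * exp (- (c*(1-t)) * x)) =
     (c*x)^m / (2^m * pochhammer h m) * integral {-1..1} (\<lambda>t. (1-t\<^sup>2) powr (h + real m - 1) * exp (- (c*(1-t)) * x))"
proof -
  define a where "a = c * x"
  have E: "exp (- (c*(1-t)) * x) = exp (-a) * exp (a * t)" for t
    unfolding a_def by (simp add: exp_add[symmetric] algebra_simps)
  have R: "((\<lambda>t. exp (-a) * ((1-t\<^sup>2) powr (h-1) * Qp h m t * exp(a*t))) has_integral
     exp (-a) * (a^m / (2^m * pochhammer h m) * integral {-1..1} (\<lambda>t. (1-t\<^sup>2) powr (h + real m - 1) * exp(a*t)))) {-1..1}"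
    by (intro has_integral_mult_right rodrigues_int h)
  have "integral {-1..1} (\<lambda>t. (1-t\<^sup>2) powr (h-1) * Qp h m t * exp (- (c*(1-t)) * x)) =
      exp (-a) * (a^m / (2^m * pochhammer h m) * integral {-1..1} (\<lambda>t. (1-t\<^sup>2) powr (h + real m - 1) * exp(a*t)))"
    using integral_unique[OF R] unfolding E by (simp add: mult_ac)
  also have "exp (-a) * integral {-1..1} (\<lambda>t. (1-t\<^sup>2) powr (h + real m - 1) * exp(a*t)) =
      integral {-1..1} (\<lambda>t. (1-t\<^sup>2) powr (h + real m - 1) * exp (- (c*(1-t)) * x))"
    unfolding E by (simp add: mult_ac)
  ultimately show ?thesis unfolding a_def by (simp add: mult_ac)
qed


lemma bound_main:
  fixes h c nu :: real and m :: nat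
  assumes h: "h > 0" and nu: "nu > 0" and c: "c > 0" and m: "real m > nu"
  shows "(LINT x:{0<..}|lborel. psi nu x *
        integral {-1..1} (\<lambda>t. (1-t\<^sup>2) powr (h-1) * Qp h m t * exp (- (c*(1-t)) * x)))
     \<le> c powr nu * Gamma (real m - nu) / (2^m * pochhammer h m) *
        (2 powr (2*h + nu + real m - 1) * Beta (h + real m) (h + nu))"
proof -
  define q0 where "q0 = h + real m - 1"
  define K0 where "K0 = c^m / (2^m * pochhammer h m)"
  define J where "J x = integral {-1..1} (\<lambda>t. (1-t\<^sup>2) powr q0 * exp (- (c*(1-t)) * x))" for x
  define RHS where "RHS = c powr nu * Gamma (real m - nu) / (2^m * pochhammer h m) *
        (2 powr (2*h + nu + real m - 1) * Beta (h + real m) (h + nu))"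
  have m1: "m \<ge> 1" using m nu by (cases m) auto
  have q0: "q0 > 0" unfolding q0_def using h m1 by simp
  have P: "pochhammer h m > 0" using h by (intro pochhammer_pos)
  have K0: "K0 > 0" unfolding K0_def using c P by simp
  have cont: "continuous_on {-1..1} (\<lambda>t. (1-t\<^sup>2) powr q0 * exp (- (c*(1-t)) * x))" for x
    by (intro continuous_intros cont_wq q0)
  have Jnn: "J x \<ge> 0" for x unfolding J_def
    by (rule integral_nonneg) (use integrable_continuous_interval[OF cont[of x]] in auto)
  have Jnn_int: "ennreal (J x) = (\<integral>\<^sup>+t. ennreal (indicator {-1<..<1} t * ((1-t\<^sup>2) powr q0 * exp (- (c*(1-t)) * x))) \<partial>lborel)" for x
  proof -
    have "((\<lambda>t. (1-t\<^sup>2) powr q0 * exp (- (c*(1-t)) * x)) has_integral J x) {-1..1}"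
      unfolding J_def by (intro integrable_integral integrable_continuous_interval cont)
    then have "((\<lambda>t. (1-t\<^sup>2) powr q0 * exp (- (c*(1-t)) * x)) has_integral J x) {-1<..<1}"
      by (simp add: has_integral_Icc_iff_Ioo)
    from nn_integral_has_integral_lebesgue[OF _ this] show ?thesis by simp
  qed
  have gx: "integral {-1..1} (\<lambda>t. (1-t\<^sup>2) powr (h-1) * Qp h m t * exp (- (c*(1-t)) * x)) = (c*x)^m / (2^m * pochhammer h m) * J x" for x
    unfolding J_def q0_def by (rule int_g_eq[OF h])
  define F where "F t x = ennreal (indicator {0<..} x * indicator {-1<..<1} t *
      (K0 * x powr (real m - nu - 1) * ((1-t\<^sup>2) powr q0 * exp (- (c*(1-t)) * x))))" for t x :: real
  have Fm: "(\<lambda>(t,x). F t x) \<in> borel_measurable (lborel \<Otimes>\<^sub>M lborel)" unfolding F_def by measurable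
  have step1: "(\<integral>\<^sup>+x. ennreal (indicator {0<..} x * (psi nu x *
        integral {-1..1} (\<lambda>t. (1-t\<^sup>2) powr (h-1) * Qp h m t * exp (- (c*(1-t)) * x)))) \<partial>lborel)
     \<le> (\<integral>\<^sup>+x. \<integral>\<^sup>+t. F t x \<partial>lborel \<partial>lborel)"
  proof (rule nn_integral_mono)
    fix x :: real
    show "ennreal (indicator {0<..} x * (psi nu x *
        integral {-1..1} (\<lambda>t. (1-t\<^sup>2) powr (h-1) * Qp h m t * exp (- (c*(1-t)) * x))))
      \<le> (\<integral>\<^sup>+t. F t x \<partial>lborel)"
    proof (cases "x > 0")
      case False
      then show ?thesis by simp
    next
      case True
      have xe: "x powr (-nu-1) * x^m = x powr (real m - nu - 1)"
        using True by (simp add: powr_realpow[symmetric] powr_add[symmetric] algebra_simps)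
      have "psi nu x * ((c*x)^m / (2^m * pochhammer h m) * J x) \<le> x powr (-nu-1) * ((c*x)^m / (2^m * pochhammer h m) * J x)"
        unfolding psi_def using True c P Jnn[of x]
        by (intro mult_right_mono) (auto intro!: mult_nonneg_nonneg simp: mult_left_le)
      also have "\<dots> = K0 * x powr (real m - nu - 1) * J x"
        unfolding K0_def xe[symmetric] by (simp add: power_mult_distrib)
      finally have le: "psi nu x * ((c*x)^m / (2^m * pochhammer h m) * J x) \<le> K0 * x powr (real m - nu - 1) * J x" .
      have "ennreal (indicator {0<..} x * (psi nu x *
          integral {-1..1} (\<lambda>t. (1-t\<^sup>2) powr (h-1) * Qp h m t * exp (- (c*(1-t)) * x))))
          \<le> ennreal (K0 * x powr (real m - nu - 1) * J x)"
        using True le unfolding gx by (intro ennreal_leI) simp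
      also have "\<dots> = ennreal (K0 * x powr (real m - nu - 1)) * ennreal (J x)"
        using K0 Jnn[of x] True by (simp add: ennreal_mult')
      also have "\<dots> = (\<integral>\<^sup>+t. ennreal (K0 * x powr (real m - nu - 1)) *
          ennreal (indicator {-1<..<1} t * ((1-t\<^sup>2) powr q0 * exp (- (c*(1-t)) * x))) \<partial>lborel)"
        unfolding Jnn_int by (rule nn_integral_cmult[symmetric]) measurable
      also have "\<dots> = (\<integral>\<^sup>+t. F t x \<partial>lborel)"
        unfolding F_def using True K0
        by (intro nn_integral_cong) (simp add: ennreal_mult'[symmetric] indicator_def mult_ac)
      finally show ?thesis .
    qed
  qed
  have step2: "(\<integral>\<^sup>+x. \<integral>\<^sup>+t. F t x \<partial>lborel \<partial>lborel) = (\<integral>\<^sup>+t. \<integral>\<^sup>+x. F t x \<partial>lborel \<partial>lborel)"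
    by (rule lborel_pair.Fubini'[OF Fm])
  define G where "G t = indicator {-1<..<1} t * (K0 * (1-t\<^sup>2) powr q0 * (Gamma (real m - nu) / (c*(1-t)) powr (real m - nu)))" for t
  have step3: "(\<integral>\<^sup>+x. F t x \<partial>lborel) = ennreal (G t)" for t
  proof (cases "t \<in> {-1<..<1}")
    case False
    then show ?thesis unfolding F_def G_def by simp
  next
    case True
    have u: "0 \<le> (1-t\<^sup>2) powr q0" by simp
    have b: "c*(1-t) > 0" using True c by simp
    have "(\<integral>\<^sup>+x. F t x \<partial>lborel) = (\<integral>\<^sup>+x. ennreal (K0 * (1-t\<^sup>2) powr q0) *
        ennreal (indicator {0<..} x * x powr (real m - nu - 1) * exp (- (c*(1-t)) * x)) \<partial>lborel)"
      unfolding F_def using True K0 u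
      by (intro nn_integral_cong) (auto simp: ennreal_mult'[symmetric] indicator_def mult_ac)
    also have "\<dots> = ennreal (K0 * (1-t\<^sup>2) powr q0) *
        (\<integral>\<^sup>+x. ennreal (indicator {0<..} x * x powr (real m - nu - 1) * exp (- (c*(1-t)) * x)) \<partial>lborel)"
      by (rule nn_integral_cmult) measurable
    also have "(\<integral>\<^sup>+x. ennreal (indicator {0<..} x * x powr (real m - nu - 1) * exp (- (c*(1-t)) * x)) \<partial>lborel)
        = ennreal (Gamma (real m - nu) / (c*(1-t)) powr (real m - nu))"
      using gamma_scaled_nn[of "real m - nu" "c*(1-t)"] m b by simp
    also have "ennreal (K0 * (1-t\<^sup>2) powr q0) * ennreal (Gamma (real m - nu) / (c*(1-t)) powr (real m - nu))
        = ennreal (G t)"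
      unfolding G_def using True K0 u m Gamma_real_pos[of "real m - nu"]
      by (simp add: ennreal_mult'[symmetric] mult_ac)
    finally show ?thesis .
  qed
  define K1 where "K1 = K0 * Gamma (real m - nu) * c powr (nu - real m)"
  have K1: "K1 > 0" unfolding K1_def using K0 m c Gamma_real_pos[of "real m - nu"] by simp
  have Gt: "G t = K1 * (indicator {-1<..<1} t * ((1-t) powr (h + nu - 1) * (1+t) powr (h + real m - 1)))" for t
  proof (cases "t \<in> {-1<..<1}")
    case False
    then show ?thesis unfolding G_def by simp
  next
    case True
    have t1: "0 < 1-t" "0 < 1+t" using True by auto
    have a: "(1-t\<^sup>2) powr q0 = (1-t) powr q0 * (1+t) powr q0"
    proof -
      have "1-t\<^sup>2 = (1-t)*(1+t)" by (simp add: power2_eq_square algebra_simps)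
      then show ?thesis using t1 by (simp add: powr_mult)
    qed
    have b: "(c*(1-t)) powr (real m - nu) = c powr (real m - nu) * (1-t) powr (real m - nu)"
      using t1 c by (simp add: powr_mult)
    have d: "(1-t) powr q0 = (1-t) powr (h + nu - 1) * (1-t) powr (real m - nu)"
      using t1 unfolding q0_def by (simp add: powr_add[symmetric] algebra_simps)
    have e: "1 / c powr (real m - nu) = c powr (nu - real m)"
      using c by (simp add: powr_minus[symmetric] divide_inverse)
    have pos: "(1-t) powr (real m - nu) > 0" "c powr (real m - nu) > 0" using t1 c by auto
    show ?thesis unfolding G_def a b d unfolding K1_def e[symmetric] q0_def using True pos
      by (simp add: field_simps)
  qed
  have step4: "(\<integral>\<^sup>+t. ennreal (G t) \<partial>lborel) = ennreal (K1 * (2 powr (2*h + nu + real m - 1) * Beta (h + real m) (h + nu)))"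
  proof -
    have "(\<integral>\<^sup>+t. ennreal (G t) \<partial>lborel) = (\<integral>\<^sup>+t. ennreal K1 *
        ennreal (indicator {-1<..<1} t * ((1-t) powr (h + nu - 1) * (1+t) powr (h + real m - 1))) \<partial>lborel)"
      unfolding Gt using K1 by (intro nn_integral_cong) (simp add: ennreal_mult')
    also have "\<dots> = ennreal K1 * (\<integral>\<^sup>+t.
        ennreal (indicator {-1<..<1} t * ((1-t) powr (h + nu - 1) * (1+t) powr (h + real m - 1))) \<partial>lborel)"
      by (rule nn_integral_cmult) measurable
    also have "(\<integral>\<^sup>+t. ennreal (indicator {-1<..<1} t * ((1-t) powr (h + nu - 1) * (1+t) powr (h + real m - 1))) \<partial>lborel)
       = ennreal (2 powr ((h + nu) + (h + real m) - 1) * Beta (h + real m) (h + nu))"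
      using beta_nn[of "h + nu" "h + real m"] h nu by simp
    finally show ?thesis using K1 by (simp add: ennreal_mult'[symmetric] algebra_simps)
  qed
  have RHS: "RHS = K1 * (2 powr (2*h + nu + real m - 1) * Beta (h + real m) (h + nu))"
  proof -
    have "c^m * c powr (nu - real m) = c powr nu"
      using c by (simp add: powr_realpow[symmetric] powr_add[symmetric])
    then show ?thesis unfolding RHS_def K1_def K0_def by (simp add: field_simps)
  qed
  have RHS0: "RHS \<ge> 0" unfolding RHS using K1 Beta_def h nu m
    by (simp add: Beta_def Gamma_real_pos less_imp_le)
  have "(\<integral>\<^sup>+x. ennreal (indicator {0<..} x * (psi nu x *
        integral {-1..1} (\<lambda>t. (1-t\<^sup>2) powr (h-1) * Qp h m t * exp (- (c*(1-t)) * x)))) \<partial>lborel) \<le> ennreal RHS"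
    using step1 unfolding step2 step3 step4 RHS .
  then have "integral\<^sup>L lborel (\<lambda>x. indicator {0<..} x * (psi nu x *
        integral {-1..1} (\<lambda>t. (1-t\<^sup>2) powr (h-1) * Qp h m t * exp (- (c*(1-t)) * x)))) \<le> RHS"
    by (rule integral_real_bounded[OF RHS0])
  then show ?thesis unfolding RHS_def set_lebesgue_integral_def by simp
qed



lemma poch_Gamma:
  fixes h :: real
  assumes h: "h > 0"
  shows "pochhammer h m * Gamma h = Gamma (h + real m)"
proof (induction m)
  case 0
  then show ?case by simp
next
  case (Suc m)
  have "Gamma (h + real (Suc m)) = (h + real m) * Gamma (h + real m)"
    using Gamma_plus1_real[of "h + real m"] h by (simp add: algebra_simps)
  then show ?case using Suc by (simp add: pochhammer_Suc algebra_simps)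
qed

lemma Gamma_ratio:
  fixes x s :: real
  assumes x: "x > 0" and s: "s \<ge> 1"
  shows "Gamma x * x powr s \<le> Gamma (x + s)"
proof -
  define f where "f = ln \<circ> (Gamma :: real \<Rightarrow> real)"
  have cv: "convex_on {0<..} f" unfolding f_def by (rule log_convex_Gamma_real)
  have "f ((1 - 1/s) *\<^sub>R x + (1/s) *\<^sub>R (x + s)) \<le> (1 - 1/s) * f x + (1/s) * f (x + s)"
    by (rule convex_onD[OF cv]) (use x s in auto)
  moreover have "(1 - 1/s) *\<^sub>R x + (1/s) *\<^sub>R (x + s) = x + 1" using s by (simp add: field_simps)
  ultimately have A: "f (x + 1) \<le> (1 - 1/s) * f x + (1/s) * f (x + s)" by simp
  have G1: "Gamma (x + 1) = x * Gamma x" by (rule Gamma_plus1_real[OF x])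
  have Gx: "Gamma x > 0" using x by (rule Gamma_real_pos)
  have Gxs: "Gamma (x + s) > 0" using x s by (intro Gamma_real_pos) simp
  have "f (x + 1) = ln (x * Gamma x)" unfolding f_def using G1 by simp
  also have "\<dots> = ln x + f x" unfolding f_def o_def using Gx x ln_mult[of x "Gamma x"] by (metis less_irrefl)
  finally have "f (x + 1) = ln x + f x" .
  with A have B: "s * (ln x + f x) \<le> s * ((1 - 1/s) * f x + (1/s) * f (x + s))"
    using s by (intro mult_left_mono) auto
  have "s * ((1 - 1/s) * f x + (1/s) * f (x + s)) = (s - 1) * f x + f (x + s)"
    using s by (simp add: field_simps)
  with B have "s * ln x + s * f x \<le> (s - 1) * f x + f (x + s)" by (simp add: algebra_simps)
  then have "s * ln x + f x \<le> f (x + s)" by (simp add: algebra_simps)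
  then have "exp (s * ln x + f x) \<le> exp (f (x + s))" by simp
  then show ?thesis unfolding f_def using Gx Gxs x
    by (simp add: exp_add powr_def mult.commute)
qed

lemma dup_real:
  fixes a :: real
  assumes a: "a > 0"
  shows "Gamma a * Gamma (a + 1/2) = 2 powr (1 - 2*a) * sqrt pi * Gamma (2*a)"
proof -
  have n1: "complex_of_real a \<notin> \<int>\<^sub>\<le>\<^sub>0"
    using a by (auto elim!: nonpos_Ints_cases simp: complex_eq_iff)
  have n2: "complex_of_real a + 1/2 \<notin> \<int>\<^sub>\<le>\<^sub>0"
    using a by (auto elim!: nonpos_Ints_cases simp: complex_eq_iff)
  have E: "Gamma (complex_of_real a) * Gamma (complex_of_real a + 1/2) =
        exp ((1 - 2 * complex_of_real a) * of_real (ln 2)) * of_real (sqrt pi) * Gamma (2 * complex_of_real a)"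
    by (rule Gamma_legendre_duplication[OF n1 n2])
  have G1: "Gamma (complex_of_real a) = of_real (Gamma a)" by (rule Gamma_complex_of_real)
  have G2: "Gamma (complex_of_real a + 1/2) = of_real (Gamma (a + 1/2))"
  proof -
    have "complex_of_real a + 1/2 = complex_of_real (a + 1/2)" by simp
    then show ?thesis by (simp only: Gamma_complex_of_real)
  qed
  have G3: "Gamma (2 * complex_of_real a) = of_real (Gamma (2*a))"
  proof -
    have "2 * complex_of_real a = complex_of_real (2*a)" by simp
    then show ?thesis by (simp only: Gamma_complex_of_real)
  qed
  have X: "exp ((1 - 2 * complex_of_real a) * of_real (ln 2)) = of_real (exp ((1 - 2*a) * ln 2))"
  proof -
    have "(1 - 2 * complex_of_real a) * of_real (ln 2) = complex_of_real ((1 - 2*a) * ln 2)" by simp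
    then show ?thesis by (simp only: exp_of_real)
  qed
  have "complex_of_real (Gamma a * Gamma (a + 1/2)) =
      complex_of_real (exp ((1 - 2*a) * ln 2) * sqrt pi * Gamma (2*a))"
    using E unfolding G1 G2 G3 X by (simp only: of_real_mult)
  then have "Gamma a * Gamma (a + 1/2) = exp ((1 - 2*a) * ln 2) * sqrt pi * Gamma (2*a)"
    using of_real_eq_iff by blast
  then show ?thesis by (simp add: powr_def)
qed


lemma mt_rep:
  fixes ell nu t :: real
  assumes ell: "ell > 0" and nu: "nu > 0" and t: "t < 1"
  shows "matern_tilde ell nu t = (1/Gamma nu) * (LINT x:{0<..}|lborel. psi nu x * exp (- ((nu/ell\<^sup>2)*(1-t)) * x))"
proof -
  define r where "r = sqrt (2 - 2*t)"
  define z where "z = sqrt (2 * nu) * r / ell"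
  have r: "r > 0" unfolding r_def using t by simp
  have z: "z > 0" unfolding z_def using r ell nu by simp
  have zz: "z\<^sup>2/4 = (nu/ell\<^sup>2)*(1-t)"
    unfolding z_def r_def using nu t ell by (simp add: power_divide power_mult_distrib field_simps)
  have Gp: "Gamma nu > 0" using nu by (rule Gamma_real_pos)
  have k: "2 powr (1 - nu) * z powr nu * ((1/2) * (z/2) powr (-nu)) = 1"
  proof -
    have "(z/2) powr (-nu) = z powr (-nu) / 2 powr (-nu)" using z by (simp add: powr_divide)
    moreover have "z powr nu * z powr (-nu) = 1" using z by (simp add: powr_add[symmetric])
    moreover have "2 powr (1 - nu) / 2 powr (-nu) = 2" by (simp add: powr_diff[symmetric])
    ultimately show ?thesis by (simp add: field_simps)
  qed
  have "matern_tilde ell nu t = 2 powr (1 - nu) / Gamma nu * z powr nu * besselK nu z"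
    unfolding matern_tilde_def matern_def z_def r_def[symmetric] using r by simp
  also have "\<dots> = 2 powr (1 - nu) / Gamma nu * z powr nu * ((1/2) * (z/2) powr (-nu) *
      (LINT x:{0<..}|lborel. psi nu x * exp (- ((nu/ell\<^sup>2)*(1-t)) * x)))"
    unfolding bessel_eq[OF nu z] zz ..
  also have "\<dots> = (2 powr (1 - nu) * z powr nu * ((1/2) * (z/2) powr (-nu))) / Gamma nu *
      (LINT x:{0<..}|lborel. psi nu x * exp (- ((nu/ell\<^sup>2)*(1-t)) * x))"
    by (simp add: field_simps)
  finally show ?thesis unfolding k by simp
qed


lemma final_ineq:
  fixes d m :: nat and ell nu :: real
  assumes d: "d \<ge> 1" and ell: "ell > 0" and nu: "nu > 1/2" and m: "real m > 2 * nu"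
  shows "sphere_area d / Gamma nu * ((nu/ell\<^sup>2) powr nu * Gamma (real m - nu) / (2^m * pochhammer (real d/2) m) *
          (2 powr (2*(real d/2) + nu + real m - 1) * Beta (real d/2 + real m) (real d/2 + nu)))
     \<le> C_tilde d nu / ell powr (2 * nu) * real m powr (- 2 * nu - real d)"
proof -
  define h where "h = real d / 2"
  define x where "x = real m - nu"
  define s where "s = 2 * nu + real d"
  define al where "al = nu + h"
  have h: "h > 0" unfolding h_def using d by simp
  have nu0: "nu > 0" using nu by simp
  have x: "x > 0" "x > real m / 2" unfolding x_def using m nu by auto
  have s: "s \<ge> 1" unfolding s_def using nu d by simp
  have al: "al > 0" unfolding al_def using h nu by simp
  have sal: "s = 2 * al" unfolding s_def al_def h_def by simp
  have mpos: "real m > 0" using m nu by simp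
  have Gnu: "Gamma nu > 0" using nu0 by (rule Gamma_real_pos)
  have Gh: "Gamma h > 0" using h by (rule Gamma_real_pos)
  have Gx: "Gamma x > 0" using x by (intro Gamma_real_pos) simp
  have Gxs: "Gamma (x + s) > 0" using x s by (intro Gamma_real_pos) simp
  have Gal: "Gamma al > 0" using al by (rule Gamma_real_pos)
  have Gal2: "Gamma (al + 1/2) > 0" using al by (intro Gamma_real_pos) simp
  have P: "pochhammer h m > 0" using h by (intro pochhammer_pos)
  have PG: "pochhammer h m * Gamma h = Gamma (h + real m)" by (rule poch_Gamma[OF h])
  have GhmP: "Gamma (h + real m) > 0" using h by (intro Gamma_real_pos) simp
  define A where "A = 2 powr (real d + nu) * pi powr h * nu powr nu * Gamma al / (Gamma nu * ell powr (2*nu))"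
  have A: "A > 0" unfolding A_def using Gal Gnu ell nu0 by simp
  have S: "sphere_area d = 2 * pi powr h / Gamma h" unfolding sphere_area_def h_def ..
  have B: "Beta (real d/2 + real m) (real d/2 + nu) = Gamma (h + real m) * Gamma al / Gamma (x + s)"
    unfolding Beta_def h_def al_def x_def s_def by (simp add: algebra_simps)
  have c: "(nu/ell\<^sup>2) powr nu = nu powr nu / ell powr (2*nu)"
  proof -
    have "(nu/ell\<^sup>2) powr nu = nu powr nu / (ell\<^sup>2) powr nu" using nu0 ell by (simp add: powr_divide)
    moreover have "(ell\<^sup>2) powr nu = ell powr (2*nu)"
    proof -
      have "ell\<^sup>2 = ell powr 2" using ell by (simp add: powr_numeral)
      then show ?thesis by (simp add: powr_powr)
    qed
    ultimately show ?thesis by simp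
  qed
  have two: "2 powr (2*(real d/2) + nu + real m - 1) = 2 powr (real d + nu) * 2^m / 2"
  proof -
    have e: "2*(real d/2) + nu + real m - 1 = ((real d + nu) + real m) - 1" by simp
    have "(2::real) powr (((real d + nu) + real m) - 1) = 2 powr ((real d + nu) + real m) / 2 powr 1"
      by (rule powr_diff)
    also have "(2::real) powr ((real d + nu) + real m) = 2 powr (real d + nu) * 2 powr (real m)"
      by (rule powr_add)
    also have "(2::real) powr (real m) = 2^m" by (rule powr_realpow) simp
    finally show ?thesis unfolding e by simp
  qed
  have LHS: "sphere_area d / Gamma nu * ((nu/ell\<^sup>2) powr nu * Gamma (real m - nu) / (2^m * pochhammer (real d/2) m) *
          (2 powr (2*(real d/2) + nu + real m - 1) * Beta (real d/2 + real m) (real d/2 + nu)))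
      = A * (Gamma x / Gamma (x + s))"
    unfolding S B c two unfolding h_def[symmetric] x_def[symmetric] A_def PG[symmetric]
    using Gnu Gh Gxs P ell by (simp add: field_simps)
  have dup: "Gamma s = Gamma al * Gamma (al + 1/2) * 2 powr s / (2 * sqrt pi)"
  proof -
    have "Gamma al * Gamma (al + 1/2) = 2 powr (1 - 2*al) * sqrt pi * Gamma (2*al)" by (rule dup_real[OF al])
    moreover have "2 powr (1 - 2*al) = 2 / 2 powr s" unfolding sal by (simp add: powr_diff)
    ultimately show ?thesis unfolding sal by (simp add: field_simps)
  qed
  have pi2: "pi powr ((real d + 1)/2) = pi powr h * sqrt pi"
  proof -
    have e: "(real d + 1)/2 = h + 1/2" unfolding h_def by (simp add: field_simps)
    have "pi powr ((real d + 1)/2) = pi powr h * pi powr (1/2)" unfolding e by (rule powr_add)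
    then show ?thesis by (simp add: powr_half_sqrt)
  qed
  have tn: "(2 * nu) powr nu = 2 powr nu * nu powr nu" using nu0 by (simp add: powr_mult)
  have td: "(2::real) ^ (d + 1) = 2 * 2 powr real d" by (simp add: powr_realpow)
  have al2: "nu + (real d + 1)/2 = al + 1/2" unfolding al_def h_def by (simp add: field_simps)
  have sd: "2 * nu + real d = s" unfolding s_def ..
  have RHS: "C_tilde d nu / ell powr (2 * nu) * real m powr (- 2 * nu - real d)
      = A * (2 powr s * exp (s + 1/6) * real m powr (- s))"
  proof -
    have "C_tilde d nu = 2 * 2 powr real d * (pi powr h * sqrt pi) * Gamma (al + 1/2) * (2 powr nu * nu powr nu) / Gamma nu
        * (Gamma al * Gamma (al + 1/2) * 2 powr s / (2 * sqrt pi)) / (Gamma (al + 1/2))\<^sup>2 * exp (s + 1/6)"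
      unfolding C_tilde_def C_const_def pi2 tn td al2 sd dup[symmetric] ..
    also have "\<dots> = 2 powr (real d + nu) * pi powr h * nu powr nu * Gamma al / Gamma nu * 2 powr s * exp (s + 1/6)"
    proof -
      have sp: "sqrt pi > 0" by simp
      have "(2::real) powr (real d + nu) = 2 powr real d * 2 powr nu" by (rule powr_add)
      then show ?thesis using sp Gal2 Gnu by (simp add: field_simps power2_eq_square)
    qed
    finally have Ceq: "C_tilde d nu = 2 powr (real d + nu) * pi powr h * nu powr nu * Gamma al / Gamma nu * 2 powr s * exp (s + 1/6)" .
    have ex: "- 2 * nu - real d = - s" unfolding s_def by simp
    show ?thesis unfolding Ceq ex A_def using Gnu ell by (simp add: field_simps)
  qed
  have key: "Gamma x / Gamma (x + s) \<le> 2 powr s * exp (s + 1/6) * real m powr (- s)"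
  proof -
    have "Gamma x * x powr s \<le> Gamma (x + s)" by (rule Gamma_ratio) (use x s in auto)
    then have "Gamma x / Gamma (x + s) \<le> x powr (-s)"
      using Gx Gxs x by (simp add: divide_simps powr_minus)
    also have "x powr (-s) \<le> (real m / 2) powr (-s)"
      by (rule powr_mono2') (use s x mpos in auto)
    also have "(real m / 2) powr (-s) = 2 powr s * real m powr (-s)"
      using mpos by (simp add: powr_divide powr_minus divide_simps)
    also have "\<dots> \<le> 2 powr s * exp (s + 1/6) * real m powr (- s)"
    proof -
      have e: "1 \<le> exp (s + 1/6)" using s by simp
      have "2 powr s * real m powr (-s) * 1 \<le> 2 powr s * real m powr (-s) * exp (s + 1/6)"
        by (intro mult_left_mono e) simp
      then show ?thesis by (simp add: mult_ac)
    qed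
    finally show ?thesis .
  qed
  show ?thesis unfolding LHS RHS using A key by (intro mult_left_mono) auto
qed


theorem lemma14:
  fixes d m :: nat and ell nu :: real
  assumes "d \<ge> 1" and "ell > 0" and "nu > 1 / 2" and "real m > 2 * nu"
  shows "matern_eigenvalue d ell nu m \<le> C_tilde d nu / ell powr (2 * nu) * real m powr (- 2 * nu - real d)"
proof -
  have d: "d \<ge> 1" and ell: "ell > 0" and nu: "nu > 1/2" and m: "real m > 2 * nu" using assms by auto
  define h where "h = real d / 2"
  define c where "c = nu / ell\<^sup>2"
  have h: "h > 0" unfolding h_def using d by simp
  have nu0: "nu > 0" using nu by simp
  have c: "c > 0" unfolding c_def using nu0 ell by simp
  have m': "real m > nu" using m nu by simp
  have Gnu: "Gamma nu > 0" using nu0 by (rule Gamma_real_pos)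
  have S0: "sphere_area d \<ge> 0" unfolding sphere_area_def using d
    by (simp add: Gamma_real_pos less_imp_le)
  have I: "integral {-1..1} (\<lambda>t. legendreP m d t * matern_tilde ell nu t * (1 - t\<^sup>2) powr ((real d - 2) / 2))
      = integral {-1..1} (\<lambda>t. Qp h m t * matern_tilde ell nu t * (1-t\<^sup>2) powr (h-1))"
  proof -
    have e: "(real d - 2) / 2 = real d / 2 - 1" by (simp add: field_simps)
    show ?thesis unfolding legendreP_Qp e h_def ..
  qed
  have kt: "matern_tilde ell nu t = (1/Gamma nu) * (LINT x:{0<..}|lborel. psi nu x * exp (- (c*(1-t)) * x))"
    if "t \<in> {-1<..<1}" for t
    unfolding c_def using mt_rep[OF ell nu0, of t] that by simp
  have F: "integral {-1..1} (\<lambda>t. Qp h m t * matern_tilde ell nu t * (1-t\<^sup>2) powr (h-1)) =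
     (1/Gamma nu) * (LINT x:{0<..}|lborel. psi nu x *
        integral {-1..1} (\<lambda>t. (1-t\<^sup>2) powr (h-1) * Qp h m t * exp (- (c*(1-t)) * x)))"
    by (rule fubini_main[OF h nu0 c kt])
  have Bd: "(LINT x:{0<..}|lborel. psi nu x *
        integral {-1..1} (\<lambda>t. (1-t\<^sup>2) powr (h-1) * Qp h m t * exp (- (c*(1-t)) * x)))
     \<le> c powr nu * Gamma (real m - nu) / (2^m * pochhammer h m) *
        (2 powr (2*h + nu + real m - 1) * Beta (h + real m) (h + nu))"
    by (rule bound_main[OF h nu0 c m'])
  have "matern_eigenvalue d ell nu m = sphere_area d / Gamma nu * (LINT x:{0<..}|lborel. psi nu x *
        integral {-1..1} (\<lambda>t. (1-t\<^sup>2) powr (h-1) * Qp h m t * exp (- (c*(1-t)) * x)))"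
    unfolding matern_eigenvalue_def I F by simp
  also have "\<dots> \<le> sphere_area d / Gamma nu * (c powr nu * Gamma (real m - nu) / (2^m * pochhammer h m) *
        (2 powr (2*h + nu + real m - 1) * Beta (h + real m) (h + nu)))"
    by (rule mult_left_mono[OF Bd]) (use S0 Gnu in simp)
  also have "\<dots> \<le> C_tilde d nu / ell powr (2 * nu) * real m powr (- 2 * nu - real d)"
    using final_ineq[OF d ell nu m] unfolding h_def c_def .
  finally show ?thesis .
qed


end
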